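(* Let $\mathbf{G}_0=(\mathbf{L}_0,\mathbf{H}_0)$ be a non-trivial partial-monitoring game in which Learner has $N=2$ actions and Nature has $M$ actions ($M\ge1$ arbitrary). Then there is a $2\times M$ bandit game $\mathbf{G}'$ with $\mathbf{G}_0\le\mathbf{G}'$. Consequently the minimax regret of $\mathbf{G}_0$ is $\Theta(\sqrt{T})$, i.e. there are constants $0<c\le C$ (depending on $\mathbf{G}_0$ but not on $T$) with $c\sqrt{T}\le R_T^*(\mathbf{G}_0)\le C\sqrt{T}$ for all $T\ge1$.
   Context: A partial-monitoring game $\mathbf{G}=(\mathbf{L},\mathbf{H})$ is given by two real $N\times M$ matrices: the loss matrix $\mathbf{L}=(\ell_{ij})$ (entries in $[0,1]$ for the games under study; in intermediate constructions arbitrary real entries are allowed) and the feedback matrix $\mathbf{H}=(h_{ij})$. Write $\underline{n}=\{1,\dots,n\}$. Nature (an oblivious adversary) fixes an outcome sequence $J_1,J_2,\ldots\in\underline{M}$ in advance, hidden from Learner. At each time $t$, Learner chooses (possibly at random) an action $I_t\in\underline{N}$, as a function of his own internal randomization and the past feedbacks $h_{I_1,J_1},\dots,h_{I_{t-1},J_{t-1}}$; he then observes $h_{I_t,J_t}$ and suffers (without observing it) loss $\ell_{I_t,J_t}$. Such a rule is a strategy (algorithm) $\mathcal{A}$. The regret is $R_T(\mathcal{A},\mathbf{G})=\mathbb{E}\big[\sum_{t=1}^T\ell_{I_t,J_t}-\min_{i\in\underline{N}}\sum_{t=1}^T\ell_{i,J_t}\big]$, the minimax regret is $R_T^*(\mathbf{G})=\inf_{\mathcal{A}}\sup_{(J_1,\dots,J_T)\in\underline{M}^T}R_T(\mathcal{A},\mathbf{G})$.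 A game is trivial if either $R_T^*(\mathbf{G})=0$ for all $T$, or there is $c>0$ with $R_T^*(\mathbf{G})\ge cT$ for all $T$ (minimax regret is zero or grows linearly); otherwise non-trivial. A bandit game is a game with $\mathbf{H}=\mathbf{L}$. For two $N\times M$ games, $\mathbf{G}'\le\mathbf{G}$ ("$\mathbf{G}'$ is easier than $\mathbf{G}$") means: for every algorithm $\mathcal{A}$ there is an algorithm $\mathcal{A}'$ such that, for every outcome sequence, $\mathcal{A}'$ played on $\mathbf{G}'$ chooses the same action sequence as $\mathcal{A}$ played on $\mathbf{G}$, and $R_T(\mathcal{A}',\mathbf{G}')\le R_T(\mathcal{A},\mathbf{G})$. *)

theory Defs
  imports "HOL-Probability.Probability"
begin

text \<open>Games are given by an N x M loss matrix L and feedback matrix H, represented as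
functions nat => nat => real; Learner's actions are 0..<N, Nature's outcomes 0..<M
(0-based indexing of the paper's 1..N, 1..M).
A (randomized) strategy of Learner is a behaviour strategy: given the history of his
own past actions and observed feedbacks, it returns a distribution over actions.\<close>

type_synonym strategy = "(nat \<times> real) list \<Rightarrow> nat pmf"

definition valid_strategy :: "nat \<Rightarrow> strategy \<Rightarrow> bool" where
  "valid_strategy N \<sigma> \<longleftrightarrow> (\<forall>h. set_pmf (\<sigma> h) \<subseteq> {..<N})"

definition valid_outcomes :: "nat \<Rightarrow> (nat \<Rightarrow> nat) \<Rightarrow> bool" where
  "valid_outcomes M J \<longleftrightarrow> (\<forall>t. J t < M)"

fun hist :: "(nat \<Rightarrow> nat \<Rightarrow> real) \<Rightarrow> strategy \<Rightarrow> (nat \<Rightarrow> nat) \<Rightarrow> nat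
             \<Rightarrow> (nat \<times> real) list pmf" where
  "hist H \<sigma> J 0 = return_pmf []"
| "hist H \<sigma> J (Suc t) =
     bind_pmf (hist H \<sigma> J t) (\<lambda>h. map_pmf (\<lambda>i. h @ [(i, H i (J t))]) (\<sigma> h))"

definition actions :: "(nat \<Rightarrow> nat \<Rightarrow> real) \<Rightarrow> strategy \<Rightarrow> (nat \<Rightarrow> nat) \<Rightarrow> nat
             \<Rightarrow> nat list pmf" where
  "actions H \<sigma> J T = map_pmf (map fst) (hist H \<sigma> J T)"

definition regret :: "nat \<Rightarrow> (nat \<Rightarrow> nat \<Rightarrow> real) \<Rightarrow> (nat \<Rightarrow> nat \<Rightarrow> real) \<Rightarrow> strategy
             \<Rightarrow> (nat \<Rightarrow> nat) \<Rightarrow> nat \<Rightarrow> real" where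
  "regret N L H \<sigma> J T =
     measure_pmf.expectation (hist H \<sigma> J T) (\<lambda>h. \<Sum>t<T. L (fst (h ! t)) (J t))
     - Min ((\<lambda>i. \<Sum>t<T. L i (J t)) ` {..<N})"

definition minimax_regret :: "nat \<Rightarrow> nat \<Rightarrow> (nat \<Rightarrow> nat \<Rightarrow> real) \<Rightarrow> (nat \<Rightarrow> nat \<Rightarrow> real)
             \<Rightarrow> nat \<Rightarrow> real" where
  "minimax_regret N M L H T =
     Inf ((\<lambda>\<sigma>. Sup ((\<lambda>J. regret N L H \<sigma> J T) ` {J. valid_outcomes M J}))
          ` {\<sigma>. valid_strategy N \<sigma>})"

definition trivial_game :: "nat \<Rightarrow> nat \<Rightarrow> (nat \<Rightarrow> nat \<Rightarrow> real) \<Rightarrow> (nat \<Rightarrow> nat \<Rightarrow> real) \<Rightarrow> bool" where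
  "trivial_game N M L H \<longleftrightarrow>
     (\<forall>T. minimax_regret N M L H T = 0)
     \<or> (\<exists>c>0. \<forall>T\<ge>1. minimax_regret N M L H T \<ge> c * real T)"

definition easier :: "nat \<Rightarrow> nat \<Rightarrow> (nat \<Rightarrow> nat \<Rightarrow> real) \<Rightarrow> (nat \<Rightarrow> nat \<Rightarrow> real)
             \<Rightarrow> (nat \<Rightarrow> nat \<Rightarrow> real) \<Rightarrow> (nat \<Rightarrow> nat \<Rightarrow> real) \<Rightarrow> bool" where
  "easier N M L' H' L H \<longleftrightarrow>
     (\<forall>\<sigma>. valid_strategy N \<sigma> \<longrightarrow>
        (\<exists>\<sigma>'. valid_strategy N \<sigma>' \<and>
           (\<forall>J. valid_outcomes M J \<longrightarrow>
              (\<forall>T. actions H' \<sigma>' J T = actions H \<sigma> J T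
                   \<and> regret N L' H' \<sigma>' J T \<le> regret N L H \<sigma> J T))))"

end

theory Submission
  imports Defs "HOL-Library.Function_Algebras"
begin

abbreviation E :: "'a pmf \<Rightarrow> ('a \<Rightarrow> real) \<Rightarrow> real" where
  "E p f \<equiv> measure_pmf.expectation p f"

lemma fin_int: "finite (set_pmf p) \<Longrightarrow> integrable (measure_pmf p) (f::_\<Rightarrow>real)"
  by (rule integrable_measure_pmf_finite)

lemma exp_bind:
  assumes "finite (set_pmf p)" "\<And>x. x \<in> set_pmf p \<Longrightarrow> finite (set_pmf (f x))"
  shows "E (bind_pmf p f) h = E p (\<lambda>x. E (f x) h)"
proof -
  have "E (bind_pmf p f) h = (\<Sum>a\<in>set_pmf p. pmf p a *\<^sub>R E (f a) h)"
    by (rule pmf_expectation_bind) (use assms in auto)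
  also have "\<dots> = E p (\<lambda>x. E (f x) h)"
    by (subst integral_measure_pmf[of "set_pmf p"]) (use assms in auto)
  finally show ?thesis .
qed

lemma exp_mono:
  assumes "finite (set_pmf p)" "\<And>x. x \<in> set_pmf p \<Longrightarrow> f x \<le> g x"
  shows "E p f \<le> E p g"
  by (rule integral_mono_AE) (use assms in \<open>auto simp: fin_int AE_measure_pmf_iff\<close>)

lemma exp_const[simp]: "E p (\<lambda>_. c) = c"
  by simp

lemma exp_le_const:
  assumes "finite (set_pmf p)" "\<And>x. x \<in> set_pmf p \<Longrightarrow> f x \<le> c"
  shows "E p f \<le> c"
  using exp_mono[of p f "\<lambda>_. c"] assms by simp

lemma exp_ge_const:
  assumes "finite (set_pmf p)" "\<And>x. x \<in> set_pmf p \<Longrightarrow> c \<le> f x"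
  shows "c \<le> E p f"
  using exp_mono[of p "\<lambda>_. c" f] assms by simp

lemma exp_cong:
  assumes "\<And>x. x \<in> set_pmf p \<Longrightarrow> f x = g x"
  shows "E p f = E p g"
  by (rule integral_cong_AE) (use assms in \<open>auto simp: AE_measure_pmf_iff\<close>)

lemma exp_add:
  "finite (set_pmf p) \<Longrightarrow> E p (\<lambda>x. f x + g x) = E p f + E p g"
  by (rule Bochner_Integration.integral_add) (auto simp: fin_int)

lemma exp_diff:
  "finite (set_pmf p) \<Longrightarrow> E p (\<lambda>x. f x - g x) = E p f - E p g"
  by (rule Bochner_Integration.integral_diff) (auto simp: fin_int)

lemma exp_cmult:
  "E p (\<lambda>x. c * f x) = c * E p f"
  by simp

lemma exp_sum:
  "finite (set_pmf p) \<Longrightarrow> E p (\<lambda>x. \<Sum>i\<in>I. f i x) = (\<Sum>i\<in>I. E p (f i))"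
  by (rule Bochner_Integration.integral_sum) (auto simp: fin_int)

lemma hist_fin: "valid_strategy N \<sigma> \<Longrightarrow> finite (set_pmf (hist H \<sigma> J T))"
proof (induction T)
  case 0 then show ?case by simp
next
  case (Suc T)
  have "finite (set_pmf (\<sigma> h))" for h
    using Suc.prems unfolding valid_strategy_def by (meson finite_lessThan finite_subset)
  then show ?case using Suc by simp
qed

lemma hist_supp:
  assumes "valid_strategy N \<sigma>"
  shows "h \<in> set_pmf (hist H \<sigma> J T) \<Longrightarrow> length h = T \<and> (\<forall>t<T. fst (h!t) < N \<and> snd (h!t) = H (fst (h!t)) (J t))"
proof (induction T arbitrary: h)
  case 0 then show ?case by simp
next
  case (Suc T)
  then obtain h' i where h': "h' \<in> set_pmf (hist H \<sigma> J T)" "i \<in> set_pmf (\<sigma> h')"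
    and h: "h = h' @ [(i, H i (J T))]" by auto
  have "i < N" using h' assms unfolding valid_strategy_def by auto
  with Suc.IH[OF h'(1)] show ?case
    by (auto simp: h nth_append less_Suc_eq)
qed

lemma hist_exp_Suc:
  assumes "valid_strategy N \<sigma>"
  shows "E (hist H \<sigma> J (Suc T)) F = E (hist H \<sigma> J T) (\<lambda>h. E (\<sigma> h) (\<lambda>i. F (h @ [(i, H i (J T))])))"
proof -
  have fs: "finite (set_pmf (\<sigma> h))" for h
    using assms unfolding valid_strategy_def by (meson finite_lessThan finite_subset)
  show ?thesis
    by (simp only: hist.simps, subst exp_bind) (auto simp: hist_fin[OF assms] fs)
qed

lemma sigma2_sub:
  assumes "valid_strategy 2 \<sigma>"
  shows "set_pmf (\<sigma> h) \<subseteq> {0,1}"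
proof
  fix x assume "x \<in> set_pmf (\<sigma> h)"
  then have "x < 2" using assms unfolding valid_strategy_def by blast
  then show "x \<in> {0,1}" by auto
qed

lemma exp_sigma2:
  assumes "valid_strategy 2 \<sigma>"
  shows "E (\<sigma> h) g = pmf (\<sigma> h) 0 * g 0 + pmf (\<sigma> h) 1 * g 1"
proof -
  have "E (\<sigma> h) g = (\<Sum>a\<in>{0,1}. g a * pmf (\<sigma> h) a)"
    by (rule integral_measure_pmf_real) (use sigma2_sub[OF assms] in auto)
  then show ?thesis by simp
qed

lemma pmf_sigma2:
  assumes "valid_strategy 2 \<sigma>"
  shows "pmf (\<sigma> h) 0 + pmf (\<sigma> h) 1 = 1"
proof -
  have "sum (pmf (\<sigma> h)) {0,1} = 1"
    by (rule sum_pmf_eq_1) (use sigma2_sub[OF assms] in auto)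
  then show ?thesis by simp
qed


fun Pq :: "nat pmf \<Rightarrow> nat \<Rightarrow> nat list pmf" where
  "Pq q 0 = return_pmf []"
| "Pq q (Suc T) = bind_pmf (Pq q T) (\<lambda>xs. map_pmf (\<lambda>j. xs @ [j]) q)"

fun JH :: "(nat\<Rightarrow>nat\<Rightarrow>real) \<Rightarrow> strategy \<Rightarrow> nat pmf \<Rightarrow> nat \<Rightarrow> ((nat\<times>real) list \<times> nat list) pmf" where
  "JH H \<sigma> q 0 = return_pmf ([],[])"
| "JH H \<sigma> q (Suc T) = bind_pmf (JH H \<sigma> q T)
     (\<lambda>p. bind_pmf (\<sigma> (fst p)) (\<lambda>i. map_pmf (\<lambda>j. (fst p @ [(i, H i j)], snd p @ [j])) q))"

definition Jx :: "nat list \<Rightarrow> nat \<Rightarrow> nat" where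
  "Jx xs t = (if t < length xs then xs!t else 0)"

lemma hist_cong: "(\<And>t. t < T \<Longrightarrow> J t = J' t) \<Longrightarrow> hist H \<sigma> J T = hist H \<sigma> J' T"
  by (induction T) auto

lemma Pq_fin: "finite (set_pmf q) \<Longrightarrow> finite (set_pmf (Pq q T))"
  by (induction T) auto

lemma Pq_supp: "xs \<in> set_pmf (Pq q T) \<Longrightarrow> length xs = T \<and> set xs \<subseteq> set_pmf q"
  apply (induction T arbitrary: xs)
   apply simp
  apply fastforce
  done

lemma sfin: "valid_strategy N \<sigma> \<Longrightarrow> finite (set_pmf (\<sigma> h))"
  unfolding valid_strategy_def by (meson finite_lessThan finite_subset)

lemma JH_fin: "valid_strategy N \<sigma> \<Longrightarrow> finite (set_pmf q) \<Longrightarrow> finite (set_pmf (JH H \<sigma> q T))"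
  by (induction T) (auto simp: sfin)

lemma JH_supp: "valid_strategy N \<sigma> \<Longrightarrow> p \<in> set_pmf (JH H \<sigma> q T) \<Longrightarrow>
   length (fst p) = T \<and> length (snd p) = T"
  by (induction T arbitrary: p) auto

lemma Pq_exp_Suc: "finite (set_pmf q) \<Longrightarrow>
  E (Pq q (Suc T)) F = E (Pq q T) (\<lambda>xs. E q (\<lambda>j. F (xs @ [j])))"
  by (simp only: Pq.simps, subst exp_bind) (auto simp: Pq_fin)

lemma JH_exp_Suc: "valid_strategy N \<sigma> \<Longrightarrow> finite (set_pmf q) \<Longrightarrow>
  E (JH H \<sigma> q (Suc T)) F = E (JH H \<sigma> q T) (\<lambda>p. E (\<sigma> (fst p)) (\<lambda>i. E q (\<lambda>j. F (fst p @ [(i, H i j)], snd p @ [j]))))"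
  apply (simp only: JH.simps)
  apply (subst exp_bind)
    apply (simp add: JH_fin)
   apply (auto simp: sfin)[1]
  apply (rule exp_cong)
  apply (subst exp_bind)
    apply (auto simp: sfin)
  done

lemma JH_eq:
  assumes "valid_strategy N \<sigma>"
  shows "JH H \<sigma> q T = bind_pmf (Pq q T) (\<lambda>xs. map_pmf (\<lambda>h. (h,xs)) (hist H \<sigma> (Jx xs) T))"
proof (induction T)
  case 0 then show ?case by (simp add: bind_return_pmf)
next
  case (Suc T)
  have A: "JH H \<sigma> q (Suc T) = bind_pmf (Pq q T) (\<lambda>xs. bind_pmf (hist H \<sigma> (Jx xs) T) (\<lambda>h.
       bind_pmf (\<sigma> h) (\<lambda>i. bind_pmf q (\<lambda>j. return_pmf (h @ [(i, H i j)], xs @ [j])))))"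
    by (simp add: Suc bind_assoc_pmf bind_return_pmf map_pmf_def)
  have B: "bind_pmf (Pq q (Suc T)) (\<lambda>xs. map_pmf (\<lambda>h. (h,xs)) (hist H \<sigma> (Jx xs) (Suc T))) =
     bind_pmf (Pq q T) (\<lambda>xs. bind_pmf q (\<lambda>j. bind_pmf (hist H \<sigma> (Jx xs) T) (\<lambda>h.
       bind_pmf (\<sigma> h) (\<lambda>i. return_pmf (h @ [(i, H i j)], xs @ [j])))))"
  proof -
    have "bind_pmf (Pq q (Suc T)) (\<lambda>xs. map_pmf (\<lambda>h. (h,xs)) (hist H \<sigma> (Jx xs) (Suc T))) =
       bind_pmf (Pq q T) (\<lambda>xs. bind_pmf q (\<lambda>j. map_pmf (\<lambda>h. (h,xs @ [j])) (hist H \<sigma> (Jx (xs@[j])) (Suc T))))"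
      by (simp add: bind_assoc_pmf bind_return_pmf map_pmf_def)
    also have "\<dots> = bind_pmf (Pq q T) (\<lambda>xs. bind_pmf q (\<lambda>j. bind_pmf (hist H \<sigma> (Jx xs) T) (\<lambda>h.
       bind_pmf (\<sigma> h) (\<lambda>i. return_pmf (h @ [(i, H i j)], xs @ [j])))))"
    proof (rule bind_pmf_cong[OF refl], rule bind_pmf_cong[OF refl])
      fix xs j assume xs: "xs \<in> set_pmf (Pq q T)"
      then have len: "length xs = T" using Pq_supp by blast
      have "hist H \<sigma> (Jx (xs@[j])) T = hist H \<sigma> (Jx xs) T"
        by (rule hist_cong) (auto simp: Jx_def nth_append len)
      moreover have "Jx (xs@[j]) T = j" by (simp add: Jx_def len[symmetric])
      ultimately show "map_pmf (\<lambda>h. (h,xs @ [j])) (hist H \<sigma> (Jx (xs@[j])) (Suc T)) =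
         bind_pmf (hist H \<sigma> (Jx xs) T) (\<lambda>h. bind_pmf (\<sigma> h) (\<lambda>i. return_pmf (h @ [(i, H i j)], xs @ [j])))"
        by (simp add: bind_assoc_pmf bind_return_pmf map_pmf_def)
    qed
    finally show ?thesis .
  qed
  show ?case
    unfolding A B
    apply (rule bind_pmf_cong[OF refl])
    apply (subst bind_commute_pmf)
    apply (rule bind_commute_pmf)
    done
qed

lemma JH_snd: "valid_strategy N \<sigma> \<Longrightarrow> map_pmf snd (JH H \<sigma> q T) = Pq q T"
  by (simp add: JH_eq map_bind_pmf pmf.map_comp o_def map_pmf_const bind_return_pmf')


definition lossJ :: "(nat\<Rightarrow>nat\<Rightarrow>real) \<Rightarrow> nat \<Rightarrow> ((nat\<times>real) list \<times> nat list) \<Rightarrow> real" where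
  "lossJ L T p = (\<Sum>t<T. L (fst (fst p ! t)) (snd p ! t))"

lemma exp_add_const: "finite (set_pmf p) \<Longrightarrow> E p (\<lambda>x. c + f x) = c + E p f"
  by (subst exp_add) auto

lemma JH_loss:
  assumes "valid_strategy N \<sigma>" "finite (set_pmf q)"
  shows "E (JH H \<sigma> q T) (lossJ L T) = (\<Sum>t<T. E (JH H \<sigma> q t) (\<lambda>p. E (\<sigma> (fst p)) (\<lambda>i. E q (L i))))"
proof (induction T)
  case 0 then show ?case by (simp add: lossJ_def)
next
  case (Suc T)
  have "E (JH H \<sigma> q (Suc T)) (lossJ L (Suc T)) =
    E (JH H \<sigma> q T) (\<lambda>p. E (\<sigma> (fst p)) (\<lambda>i. E q (\<lambda>j. lossJ L (Suc T) (fst p @ [(i, H i j)], snd p @ [j]))))"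
    by (rule JH_exp_Suc[OF assms])
  also have "\<dots> = E (JH H \<sigma> q T) (\<lambda>p. lossJ L T p + E (\<sigma> (fst p)) (\<lambda>i. E q (L i)))"
  proof (rule exp_cong)
    fix p assume p: "p \<in> set_pmf (JH H \<sigma> q T)"
    then have l: "length (fst p) = T" "length (snd p) = T" using JH_supp[OF assms(1)] by auto
    have "lossJ L (Suc T) (fst p @ [(i, H i j)], snd p @ [j]) = lossJ L T p + L i j" for i j
      unfolding lossJ_def using l by (simp add: nth_append)
    then show "E (\<sigma> (fst p)) (\<lambda>i. E q (\<lambda>j. lossJ L (Suc T) (fst p @ [(i, H i j)], snd p @ [j]))) =
       lossJ L T p + E (\<sigma> (fst p)) (\<lambda>i. E q (L i))"
      by (simp add: exp_add_const assms(2) sfin[OF assms(1)])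
  qed
  also have "\<dots> = E (JH H \<sigma> q T) (lossJ L T) + E (JH H \<sigma> q T) (\<lambda>p. E (\<sigma> (fst p)) (\<lambda>i. E q (L i)))"
    by (rule exp_add) (rule JH_fin[OF assms])
  finally show ?case using Suc by simp
qed

lemma sum_list_nth: "sum_list (map f xs) = (\<Sum>t<length xs. f (xs!t))"
  by (simp add: sum_list_sum_nth atLeast0LessThan)

lemma Min2: "Min ((\<lambda>i. f i) ` {..<2::nat}) = min (f 0) (f 1)"
proof -
  have "{..<2::nat} = {0,1}" by auto
  then show ?thesis by simp
qed

lemma avg_regret:
  assumes "valid_strategy 2 \<sigma>" "finite (set_pmf q)"
  shows "E (Pq q T) (\<lambda>xs. regret 2 L H \<sigma> (Jx xs) T) = E (JH H \<sigma> q T) (lossJ L T)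
     - E (Pq q T) (\<lambda>xs. min (sum_list (map (L 0) xs)) (sum_list (map (L 1) xs)))"
proof -
  have "E (Pq q T) (\<lambda>xs. regret 2 L H \<sigma> (Jx xs) T) =
     E (Pq q T) (\<lambda>xs. E (hist H \<sigma> (Jx xs) T) (\<lambda>h. lossJ L T (h,xs))
       - min (sum_list (map (L 0) xs)) (sum_list (map (L 1) xs)))"
  proof (rule exp_cong)
    fix xs assume "xs \<in> set_pmf (Pq q T)"
    then have l: "length xs = T" using Pq_supp by blast
    have a: "(\<Sum>t<T. L i (Jx xs t)) = sum_list (map (L i) xs)" for i
      by (simp add: sum_list_nth l Jx_def)
    have b: "lossJ L T (h,xs) = (\<Sum>t<T. L (fst (h ! t)) (Jx xs t))" for h
      by (simp add: lossJ_def Jx_def l)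
    show "regret 2 L H \<sigma> (Jx xs) T = E (hist H \<sigma> (Jx xs) T) (\<lambda>h. lossJ L T (h,xs))
       - min (sum_list (map (L 0) xs)) (sum_list (map (L 1) xs))"
      unfolding regret_def b Min2 a by simp
  qed
  also have "\<dots> = E (Pq q T) (\<lambda>xs. E (hist H \<sigma> (Jx xs) T) (\<lambda>h. lossJ L T (h,xs)))
     - E (Pq q T) (\<lambda>xs. min (sum_list (map (L 0) xs)) (sum_list (map (L 1) xs)))"
    by (rule exp_diff) (rule Pq_fin[OF assms(2)])
  also have "E (Pq q T) (\<lambda>xs. E (hist H \<sigma> (Jx xs) T) (\<lambda>h. lossJ L T (h,xs))) = E (JH H \<sigma> q T) (lossJ L T)"
    unfolding JH_eq[OF assms(1)]
    by (subst exp_bind) (auto simp: Pq_fin[OF assms(2)] hist_fin[OF assms(1)])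
  finally show ?thesis .
qed

lemma Jx_valid:
  assumes "set xs \<subseteq> {..<M}" "M \<ge> 1"
  shows "valid_outcomes M (Jx xs)"
  using assms unfolding valid_outcomes_def Jx_def by (auto simp: subset_iff)

lemma avg_le_sup:
  assumes "valid_strategy 2 \<sigma>" "finite (set_pmf q)" "set_pmf q \<subseteq> {..<M}" "M \<ge> 1"
    and bdd: "bdd_above ((\<lambda>J. regret 2 L H \<sigma> J T) ` {J. valid_outcomes M J})"
  shows "E (Pq q T) (\<lambda>xs. regret 2 L H \<sigma> (Jx xs) T) \<le> Sup ((\<lambda>J. regret 2 L H \<sigma> J T) ` {J. valid_outcomes M J})"
proof (rule exp_le_const[OF Pq_fin[OF assms(2)]])
  fix xs assume "xs \<in> set_pmf (Pq q T)"
  then have "set xs \<subseteq> {..<M}" using Pq_supp assms(3) by blast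
  then have "valid_outcomes M (Jx xs)" using Jx_valid assms(4) by blast
  then show "regret 2 L H \<sigma> (Jx xs) T \<le> Sup ((\<lambda>J. regret 2 L H \<sigma> J T) ` {J. valid_outcomes M J})"
    by (intro cSup_upper bdd) auto
qed

lemma regret_le:
  assumes "valid_strategy 2 \<sigma>" "valid_outcomes M J" "\<forall>i<2. \<forall>j<M. 0 \<le> L i j \<and> L i j \<le> 1"
  shows "regret 2 L H \<sigma> J T \<le> T"
proof -
  have "E (hist H \<sigma> J T) (\<lambda>h. \<Sum>t<T. L (fst (h ! t)) (J t)) \<le> T"
  proof (rule exp_le_const[OF hist_fin[OF assms(1)]])
    fix h assume "h \<in> set_pmf (hist H \<sigma> J T)"
    then have "\<forall>t<T. fst (h!t) < 2" using hist_supp[OF assms(1)] by blast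
    then have "(\<Sum>t<T. L (fst (h ! t)) (J t)) \<le> (\<Sum>t<T. 1)"
      using assms(2,3) unfolding valid_outcomes_def by (intro sum_mono) auto
    then show "(\<Sum>t<T. L (fst (h ! t)) (J t)) \<le> T" by simp
  qed
  moreover have "0 \<le> (\<Sum>t<T. L i (J t))" if "i < 2" for i
    using assms(2,3) that unfolding valid_outcomes_def by (intro sum_nonneg) auto
  then have "0 \<le> (\<Sum>t<T. L 0 (J t))" "0 \<le> (\<Sum>t<T. L 1 (J t))" by auto
  ultimately show ?thesis unfolding regret_def Min2 by linarith
qed

lemma regret_ge_const:
  assumes "valid_strategy 2 \<sigma>"
  shows "regret 2 L H \<sigma> (\<lambda>_. j) T \<ge> 0"
proof -
  have "T * min (L 0 j) (L 1 j) \<le> E (hist H \<sigma> (\<lambda>_. j) T) (\<lambda>h. \<Sum>t<T. L (fst (h ! t)) j)"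
  proof (rule exp_ge_const[OF hist_fin[OF assms(1)]])
    fix h assume "h \<in> set_pmf (hist H \<sigma> (\<lambda>_. j) T)"
    then have f: "\<forall>t<T. fst (h!t) < 2" using hist_supp[OF assms(1)] by blast
    have "L (fst (h ! t)) j \<ge> min (L 0 j) (L 1 j)" if "t < T" for t
    proof -
      have "fst (h!t) = 0 \<or> fst (h!t) = 1" using f that by auto
      then show ?thesis by auto
    qed
    then have "(\<Sum>t<T. min (L 0 j) (L 1 j)) \<le> (\<Sum>t<T. L (fst (h ! t)) j)"
      by (intro sum_mono) auto
    then show "T * min (L 0 j) (L 1 j) \<le> (\<Sum>t<T. L (fst (h ! t)) j)" by simp
  qed
  moreover have "Min ((\<lambda>i. \<Sum>t<T. L i j) ` {..<2}) = T * min (L 0 j) (L 1 j)"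
    by (simp add: Min2 min_mult_distrib_left)
  ultimately show ?thesis unfolding regret_def by simp
qed


lemma exp_Pq_sum:
  assumes "finite (set_pmf q)"
  shows "E (Pq q T) (\<lambda>xs. sum_list (map f xs)) = T * E q f"
proof (induction T)
  case 0 then show ?case by simp
next
  case (Suc T)
  have "E (Pq q (Suc T)) (\<lambda>xs. sum_list (map f xs)) = E (Pq q T) (\<lambda>xs. sum_list (map f xs) + E q f)"
    by (subst Pq_exp_Suc[OF assms]) (simp add: exp_add_const assms)
  also have "\<dots> = E (Pq q T) (\<lambda>xs. sum_list (map f xs)) + E q f"
    by (simp add: exp_add Pq_fin[OF assms])
  finally show ?case using Suc by (simp add: algebra_simps)
qed

definition twopt :: "real \<Rightarrow> nat \<Rightarrow> nat \<Rightarrow> nat pmf" where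
  "twopt r a b = map_pmf (\<lambda>x. if x then a else b) (bernoulli_pmf r)"

lemma twopt_exp:
  assumes "0 \<le> r" "r \<le> 1"
  shows "E (twopt r a b) g = r * g a + (1 - r) * g b"
proof -
  have "E (twopt r a b) g = E (bernoulli_pmf r) (\<lambda>x. g (if x then a else b))"
    by (simp add: twopt_def)
  also have "\<dots> = (\<Sum>x\<in>{True,False}. g (if x then a else b) * pmf (bernoulli_pmf r) x)"
    by (rule integral_measure_pmf_real) auto
  finally show ?thesis using assms by simp
qed

lemma twopt_set: "set_pmf (twopt r a b) \<subseteq> {a,b}"
  by (auto simp: twopt_def)

lemma twopt_fin: "finite (set_pmf (twopt r a b))"
  using twopt_set by (rule finite_subset) simp

lemma poly_ineq:
  assumes a: "(a::real) > 0"
  shows "x^2 \<le> a * \<bar>x\<bar> + x^4 / a^2"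
proof -
  have n1: "0 \<le> x^4 / a^2" by simp
  have n2: "0 \<le> a * \<bar>x\<bar>" using a by simp
  show ?thesis
  proof (cases "\<bar>x\<bar> \<le> a")
    case True
    have "x^2 = \<bar>x\<bar> * \<bar>x\<bar>" by (metis abs_mult_self_eq power2_eq_square)
    also have "\<dots> \<le> a * \<bar>x\<bar>" by (rule mult_right_mono) (use True in auto)
    finally show ?thesis using n1 by linarith
  next
    case False
    have "a^2 \<le> \<bar>x\<bar>^2" by (rule power_mono) (use False a in auto)
    then have "a^2 \<le> x^2" by simp
    then have "x^2 * a^2 \<le> x^2 * x^2" by (rule mult_left_mono) auto
    moreover have "x^4 = x^2 * x^2" by (simp add: power4_eq_xxxx power2_eq_square)
    ultimately have "x^2 * a^2 \<le> x^4" by linarith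
    then have "x^2 \<le> x^4 / a^2" by (subst pos_le_divide_eq) (use a in auto)
    then show ?thesis using n2 by linarith
  qed
qed

locale twogame =
  fixes L :: "nat \<Rightarrow> nat \<Rightarrow> real" and j1 j2 :: nat
  assumes d1: "L 0 j1 - L 1 j1 > 0" and d2: "L 0 j2 - L 1 j2 < 0"
begin

definition "dd j = L 0 j - L 1 j"
definition "qq = - dd j2 / (dd j1 - dd j2)"
definition "q = twopt qq j1 j2"
definition "v = qq * (dd j1)^2 + (1 - qq) * (dd j2)^2"
definition "m3 = qq * (dd j1)^3 + (1 - qq) * (dd j2)^3"
definition "m4 = qq * (dd j1)^4 + (1 - qq) * (dd j2)^4"
definition "K = m4 + 3 * v^2"
definition "D xs = sum_list (map dd xs)"

lemma qq: "0 < qq" "qq < 1"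
  using d1 d2 by (auto simp: qq_def dd_def field_simps)

lemma m1: "qq * dd j1 + (1 - qq) * dd j2 = 0"
  using d1 d2 by (simp add: qq_def dd_def field_simps)

lemma Eq: "E q g = qq * g j1 + (1 - qq) * g j2"
  unfolding q_def using qq by (intro twopt_exp) auto

lemma qfin: "finite (set_pmf q)" unfolding q_def by (rule twopt_fin)

lemma v_pos: "v > 0"
proof -
  have "qq * (dd j1)^2 > 0" using qq d1 by (simp add: dd_def)
  moreover have "(1 - qq) * (dd j2)^2 \<ge> 0" using qq by simp
  ultimately show ?thesis unfolding v_def by linarith
qed

lemma m4_nn: "m4 \<ge> 0"
  unfolding m4_def using qq by (intro add_nonneg_nonneg mult_nonneg_nonneg) auto

lemma PSuc: "E (Pq q (Suc T)) F = E (Pq q T) (\<lambda>xs. qq * F (xs @ [j1]) + (1 - qq) * F (xs @ [j2]))"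
  by (subst Pq_exp_Suc[OF qfin]) (simp add: Eq)

lemma Pfin: "finite (set_pmf (Pq q T))" by (rule Pq_fin[OF qfin])

lemma D_app: "D (xs @ [j]) = D xs + dd j" by (simp add: D_def)

lemma ED: "E (Pq q T) D = 0"
proof (induction T)
  case 0 then show ?case by (simp add: D_def)
next
  case (Suc T)
  have "E (Pq q (Suc T)) D = E (Pq q T) (\<lambda>xs. D xs + (qq * dd j1 + (1 - qq) * dd j2))"
    unfolding PSuc D_app by (rule exp_cong) (simp add: algebra_simps)
  then show ?case using Suc by (simp add: m1)
qed

lemma ED2: "E (Pq q T) (\<lambda>xs. (D xs)^2) = T * v"
proof (induction T)
  case 0 then show ?case by (simp add: D_def)
next
  case (Suc T)
  have id: "qq * (x + dd j1)^2 + (1 - qq) * (x + dd j2)^2 = x^2 + 2 * (qq * dd j1 + (1 - qq) * dd j2) * x + v" for x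
    unfolding v_def by algebra
  have "E (Pq q (Suc T)) (\<lambda>xs. (D xs)^2) = E (Pq q T) (\<lambda>xs. (D xs)^2 + v)"
    unfolding PSuc D_app id m1 by simp
  also have "\<dots> = E (Pq q T) (\<lambda>xs. (D xs)^2) + v" by (simp add: exp_add Pfin)
  finally show ?case using Suc by (simp add: algebra_simps)
qed

lemma ED4: "E (Pq q T) (\<lambda>xs. (D xs)^4) \<le> K * T^2"
proof (induction T)
  case 0 then show ?case by (simp add: D_def)
next
  case (Suc T)
  have id: "qq * (x + dd j1)^4 + (1 - qq) * (x + dd j2)^4 =
     x^4 + 4 * (qq * dd j1 + (1 - qq) * dd j2) * x^3 + 6 * v * x^2 + 4 * m3 * x + m4" for x
    unfolding v_def m3_def m4_def by algebra
  have "E (Pq q (Suc T)) (\<lambda>xs. (D xs)^4) = E (Pq q T) (\<lambda>xs. (D xs)^4 + 6 * v * (D xs)^2 + 4 * m3 * D xs + m4)"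
    unfolding PSuc D_app id m1 by simp
  also have "\<dots> = E (Pq q T) (\<lambda>xs. (D xs)^4) + 6 * v * E (Pq q T) (\<lambda>xs. (D xs)^2) + 4 * m3 * E (Pq q T) D + m4"
    by (simp add: exp_add Pfin)
  also have "\<dots> = E (Pq q T) (\<lambda>xs. (D xs)^4) + 6 * v^2 * T + m4"
    unfolding ED ED2 by (simp add: power2_eq_square)
  also have "\<dots> \<le> K * T^2 + 6 * v^2 * T + m4" using Suc by simp
  also have "\<dots> \<le> K * (Suc T)^2"
  proof -
    have "6 * v^2 * T \<le> 2 * K * T" unfolding K_def using m4_nn by (simp add: mult_right_mono)
    moreover have "m4 \<le> K" unfolding K_def by simp
    ultimately show ?thesis by (simp add: power2_eq_square algebra_simps)
  qed
  finally show ?case .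
qed

lemma K_pos: "K > 0" unfolding K_def using m4_nn v_pos by (simp add: add_nonneg_pos)

lemma EabsD: "T \<ge> 1 \<Longrightarrow> E (Pq q T) (\<lambda>xs. \<bar>D xs\<bar>) \<ge> (v / (2 * (2*K/v + 1))) * sqrt T"
proof -
  assume T: "T \<ge> 1"
  define c1 where "c1 = 2*K/v + 1"
  have c1: "c1 \<ge> 1" "c1 \<ge> 2*K/v" unfolding c1_def using K_pos v_pos by auto
  have "c1 * 1 \<le> c1 * c1" by (rule mult_left_mono) (use c1 in auto)
  then have "c1 \<le> c1^2" by (simp add: power2_eq_square)
  then have c1sq: "c1^2 \<ge> 2*K/v" using c1 by linarith
  define a where "a = c1 * sqrt T"
  have sT: "sqrt T > 0" using T by simp
  have a: "a > 0" unfolding a_def using c1 sT by simp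
  have "T * v = E (Pq q T) (\<lambda>xs. (D xs)^2)" by (simp add: ED2)
  also have "\<dots> \<le> E (Pq q T) (\<lambda>xs. a * \<bar>D xs\<bar> + (1/a^2) * (D xs)^4)"
    by (rule exp_mono[OF Pfin]) (use poly_ineq[OF a] in simp)
  also have "\<dots> = a * E (Pq q T) (\<lambda>xs. \<bar>D xs\<bar>) + (1/a^2) * E (Pq q T) (\<lambda>xs. (D xs)^4)"
    by (simp add: exp_add Pfin)
  also have "\<dots> \<le> a * E (Pq q T) (\<lambda>xs. \<bar>D xs\<bar>) + (1/a^2) * (K * T^2)"
    using ED4 a by (simp add: divide_right_mono)
  finally have ineq: "T * v \<le> a * E (Pq q T) (\<lambda>xs. \<bar>D xs\<bar>) + K * T^2 / a^2" by simp
  have a2: "a^2 = c1^2 * T" unfolding a_def by (simp add: power_mult_distrib)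
  have "K * T^2 / a^2 = K * T / c1^2" unfolding a2 using T by (simp add: power2_eq_square)
  also have "\<dots> \<le> T * v / 2"
  proof -
    have "K \<le> c1^2 * v / 2" using c1sq v_pos by (simp add: field_simps)
    then have "K * T \<le> c1^2 * v / 2 * T" by (rule mult_right_mono) auto
    moreover have "c1^2 > 0" using c1 by simp
    ultimately show ?thesis by (simp add: field_simps)
  qed
  finally have "T * v / 2 \<le> a * E (Pq q T) (\<lambda>xs. \<bar>D xs\<bar>)" using ineq by linarith
  then have "T * v / 2 / a \<le> E (Pq q T) (\<lambda>xs. \<bar>D xs\<bar>)" using a by (simp add: field_simps)
  moreover have "T * v / 2 / a = (v / (2 * c1)) * sqrt T"
  proof -
    have e: "real T = sqrt T * sqrt T" by simp
    have "T * v / 2 / a = (sqrt T * sqrt T) * v / (2 * (c1 * sqrt T))" unfolding a_def e[symmetric] by simp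
    also have "\<dots> = (v / (2 * c1)) * sqrt T" using sT c1 by (simp add: field_simps)
    finally show ?thesis .
  qed
  ultimately show ?thesis unfolding c1_def by simp
qed

lemma avg_sqrt:
  assumes "valid_strategy 2 \<sigma>" "T \<ge> 1"
  shows "E (Pq q T) (\<lambda>xs. regret 2 L H \<sigma> (Jx xs) T) \<ge> (v / (4 * (2*K/v + 1))) * sqrt T"
proof -
  define \<mu> where "\<mu> = E q (L 1)"
  have mu0: "E q (L 0) = \<mu>" unfolding \<mu>_def Eq using m1 by (simp add: dd_def algebra_simps)
  have "E (JH H \<sigma> q T) (lossJ L T) = (\<Sum>t<T. E (JH H \<sigma> q t) (\<lambda>p. E (\<sigma> (fst p)) (\<lambda>i. E q (L i))))"
    by (rule JH_loss[OF assms(1) qfin])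
  also have "\<dots> = (\<Sum>t<T. \<mu>)"
  proof (rule sum.cong[OF refl])
    fix t
    have "E (\<sigma> h) (\<lambda>i. E q (L i)) = \<mu>" for h
      using pmf_sigma2[OF assms(1), of h] unfolding exp_sigma2[OF assms(1)] mu0 \<mu>_def
      by (simp add: distrib_right[symmetric])
    then show "E (JH H \<sigma> q t) (\<lambda>p. E (\<sigma> (fst p)) (\<lambda>i. E q (L i))) = \<mu>" by simp
  qed
  finally have loss: "E (JH H \<sigma> q T) (lossJ L T) = T * \<mu>" by simp
  have "E (Pq q T) (\<lambda>xs. min (sum_list (map (L 0) xs)) (sum_list (map (L 1) xs))) =
     E (Pq q T) (\<lambda>xs. sum_list (map (L 1) xs) + (1/2) * D xs - (1/2) * \<bar>D xs\<bar>)"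
  proof (rule exp_cong)
    fix xs
    have "sum_list (map (L 0) xs) = sum_list (map (L 1) xs) + D xs"
      unfolding D_def dd_def by (induction xs) auto
    then show "min (sum_list (map (L 0) xs)) (sum_list (map (L 1) xs)) =
       sum_list (map (L 1) xs) + (1/2) * D xs - (1/2) * \<bar>D xs\<bar>" by (simp add: min_def abs_if)
  qed
  also have "\<dots> = E (Pq q T) (\<lambda>xs. sum_list (map (L 1) xs)) + (1/2) * E (Pq q T) D - (1/2) * E (Pq q T) (\<lambda>xs. \<bar>D xs\<bar>)"
    by (simp add: exp_add exp_diff Pfin)
  also have "\<dots> = T * \<mu> - (1/2) * E (Pq q T) (\<lambda>xs. \<bar>D xs\<bar>)"
    by (simp add: ED exp_Pq_sum[OF qfin] \<mu>_def)
  finally have mn: "E (Pq q T) (\<lambda>xs. min (sum_list (map (L 0) xs)) (sum_list (map (L 1) xs))) =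
     T * \<mu> - (1/2) * E (Pq q T) (\<lambda>xs. \<bar>D xs\<bar>)" .
  have r1: "E (Pq q T) (\<lambda>xs. regret 2 L H \<sigma> (Jx xs) T) = (1/2) * E (Pq q T) (\<lambda>xs. \<bar>D xs\<bar>)"
    unfolding avg_regret[OF assms(1) qfin] loss mn by simp
  have r2: "(v / (4 * (2*K/v + 1))) * sqrt T = (1/2) * ((v / (2 * (2*K/v + 1))) * sqrt T)" by simp
  have r3: "(1/2) * ((v / (2 * (2*K/v + 1))) * sqrt T) \<le> (1/2) * E (Pq q T) (\<lambda>xs. \<bar>D xs\<bar>)"
    by (rule mult_left_mono) (use EabsD[OF assms(2)] in auto)
  show ?thesis by (subst r1, subst r2, rule r3)
qed

end


definition scl :: "real \<Rightarrow> (nat \<Rightarrow> real) \<Rightarrow> (nat \<Rightarrow> real)" where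
  "scl c f = (\<lambda>x. c * f x)"

interpretation fv: vector_space scl
  by unfold_locales (auto simp: scl_def fun_eq_iff algebra_simps)

interpretation fvp: vector_space_pair scl "scaleR :: real \<Rightarrow> real \<Rightarrow> real"
  by unfold_locales

lemma sep:
  assumes "d \<notin> fv.span G"
  shows "\<exists>g. Vector_Spaces.linear scl (scaleR :: real \<Rightarrow> real \<Rightarrow> real) g \<and> (\<forall>x\<in>G. g x = 0) \<and> g d = 1"
proof -
  obtain B where B: "B \<subseteq> G" "fv.independent B" "G \<subseteq> fv.span B"
    using fv.maximal_independent_subset[of G] by blast
  have "fv.span B \<subseteq> fv.span G" using B(1) by (rule fv.span_mono)
  then have dB: "d \<notin> fv.span B" using assms by blast
  then have ind: "fv.independent (insert d B)" using B(2) by (rule fv.independent_insertI)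
  obtain g where g: "Vector_Spaces.linear scl (scaleR :: real \<Rightarrow> real \<Rightarrow> real) g" "\<forall>x\<in>insert d B. g x = (if x = d then 1 else 0)"
    using fvp.linear_independent_extend[OF ind, of "\<lambda>x. if x = d then 1 else 0"] by blast
  interpret lg: Vector_Spaces.linear scl "scaleR :: real \<Rightarrow> real \<Rightarrow> real" g by (rule g(1))
  have "fv.span B \<subseteq> {x. g x = 0}"
  proof (rule fv.span_minimal)
    show "B \<subseteq> {x. g x = 0}" using g(2) dB fv.span_base by fastforce
    show "fv.subspace {x. g x = 0}" by (rule lg.subspace_kernel)
  qed
  then have "\<forall>x\<in>G. g x = 0" using B(3) by blast
  moreover have "g d = 1" using g(2) by simp
  ultimately show ?thesis using g(1) by blast
qed

lemma fun_sum_apply: "(sum F A) x = (\<Sum>a\<in>A. F a x)" for F :: "'i \<Rightarrow> nat \<Rightarrow> real"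
  by (induction A rule: infinite_finite_induct) auto

definition delta :: "nat \<Rightarrow> nat \<Rightarrow> real" where
  "delta j = (\<lambda>x. if x = j then 1 else 0)"

lemma expand:
  assumes "\<And>x. x \<ge> M \<Longrightarrow> v x = 0"
  shows "v = (\<Sum>j<M. scl (v j) (delta j))"
proof
  fix x
  have "(\<Sum>j<M. scl (v j) (delta j)) x = (\<Sum>j<M. if j = x then v j else 0)"
    unfolding fun_sum_apply scl_def delta_def by (rule sum.cong) auto
  also have "\<dots> = (if x < M then v x else 0)" by (simp add: sum.delta)
  also have "\<dots> = v x" using assms[of x] by auto
  finally show "v x = (\<Sum>j<M. scl (v j) (delta j)) x" by simp
qed

lemma lin_expand:
  assumes "Vector_Spaces.linear scl (scaleR :: real \<Rightarrow> real \<Rightarrow> real) g" "\<And>x. x \<ge> M \<Longrightarrow> v x = 0"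
  shows "g v = (\<Sum>j<M. v j * g (delta j))"
proof -
  interpret lg: Vector_Spaces.linear scl "scaleR :: real \<Rightarrow> real \<Rightarrow> real" g by (rule assms(1))
  have "g v = g (\<Sum>j<M. scl (v j) (delta j))" using expand[of M v] assms(2) by metis
  also have "\<dots> = (\<Sum>j<M. v j * g (delta j))" by (simp add: lg.sum lg.scale)
  finally show ?thesis .
qed

lemma obs_or_w:
  fixes d :: "nat \<Rightarrow> real" and H :: "nat \<Rightarrow> nat \<Rightarrow> real"
  shows "(\<exists>f g. \<forall>j<M. d j = f (H 0 j) + g (H 1 j)) \<or>
    (\<exists>w. (\<forall>i<2. \<forall>s. (\<Sum>j\<in>{j. j<M \<and> H i j = s}. w j) = 0) \<and> (\<Sum>j<M. w j) = 0 \<and> (\<Sum>j<M. w j * d j) = 1)"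
proof -
  define e where "e i s = (\<lambda>j. if j < M \<and> H i j = s then 1 else (0::real))" for i s
  define one where "one = (\<lambda>j. if j < M then 1 else (0::real))"
  define G where "G = {e i s | i s. i < (2::nat)} \<union> {one}"
  define d' where "d' = (\<lambda>j. if j < M then d j else 0)"
  show ?thesis
  proof (cases "d' \<in> fv.span G")
    case True
    define P where "P = {v. \<exists>f g. \<forall>j. v j = (if j < M then f (H 0 j) + g (H 1 j) else (0::real))}"
    have "fv.span G \<subseteq> P"
    proof (rule fv.span_minimal)
      show "G \<subseteq> P"
      proof
        fix x assume "x \<in> G"
        then consider i s where "i < 2" "x = e i s" | "x = one" unfolding G_def by blast
        then show "x \<in> P"
        proof cases
          case 1
          then have "i = 0 \<or> i = 1" by auto
          then show ?thesis
          proof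
            assume "i = 0"
            then show ?thesis unfolding P_def 1 e_def
              by (intro CollectI exI[of _ "\<lambda>y. if y = s then 1 else 0"] exI[of _ "\<lambda>_. 0"]) auto
          next
            assume "i = 1"
            then show ?thesis unfolding P_def 1 e_def
              by (intro CollectI exI[of _ "\<lambda>_. 0"] exI[of _ "\<lambda>y. if y = s then 1 else 0"]) auto
          qed
        next
          case 2
          then show ?thesis unfolding P_def one_def
            by (intro CollectI exI[of _ "\<lambda>_. 1"] exI[of _ "\<lambda>_. 0"]) auto
        qed
      qed
      show "fv.subspace P"
      proof (rule fv.subspaceI)
        show "0 \<in> P" unfolding P_def by (intro CollectI exI[of _ "\<lambda>_. 0"]) auto
        show "x + y \<in> P" if xP: "x \<in> P" and yP: "y \<in> P" for x y
        proof -
          obtain f1 g1 where 1: "\<forall>j. x j = (if j < M then f1 (H 0 j) + g1 (H 1 j) else 0)"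
            using xP unfolding P_def by blast
          obtain f2 g2 where 2: "\<forall>j. y j = (if j < M then f2 (H 0 j) + g2 (H 1 j) else 0)"
            using yP unfolding P_def by blast
          show ?thesis unfolding P_def
            by (intro CollectI exI[of _ "\<lambda>s. f1 s + f2 s"] exI[of _ "\<lambda>s. g1 s + g2 s"]) (simp add: 1 2)
        qed
        show "scl c x \<in> P" if xP: "x \<in> P" for c x
        proof -
          obtain f1 g1 where 1: "\<forall>j. x j = (if j < M then f1 (H 0 j) + g1 (H 1 j) else 0)"
            using xP unfolding P_def by blast
          show ?thesis unfolding P_def
            by (intro CollectI exI[of _ "\<lambda>s. c * f1 s"] exI[of _ "\<lambda>s. c * g1 s"]) (simp add: 1 scl_def algebra_simps)
        qed
      qed
    qed
    then have "d' \<in> P" using True by blast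
    then obtain f g where "\<forall>j. d' j = (if j < M then f (H 0 j) + g (H 1 j) else 0)"
      unfolding P_def by blast
    then have "\<forall>j<M. d j = f (H 0 j) + g (H 1 j)" unfolding d'_def by (metis)
    then show ?thesis by blast
  next
    case False
    then obtain g where g: "Vector_Spaces.linear scl (scaleR :: real \<Rightarrow> real \<Rightarrow> real) g" "\<forall>x\<in>G. g x = 0" "g d' = 1"
      using sep by blast
    define w where "w j = g (delta j)" for j
    have ev: "g v = (\<Sum>j<M. v j * w j)" if "\<And>x. x \<ge> M \<Longrightarrow> v x = 0" for v
      unfolding w_def by (rule lin_expand[OF g(1) that])
    have "(\<Sum>j\<in>{j. j<M \<and> H i j = s}. w j) = 0" if "i < 2" for i s
    proof -
      have "g (e i s) = 0" using g(2) that unfolding G_def by blast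
      moreover have "g (e i s) = (\<Sum>j<M. e i s j * w j)" by (rule ev) (auto simp: e_def)
      moreover have "(\<Sum>j<M. e i s j * w j) = (\<Sum>j\<in>{j. j<M \<and> H i j = s}. w j)"
      proof -
        have "(\<Sum>j<M. e i s j * w j) = (\<Sum>j<M. if H i j = s then w j else 0)"
          by (rule sum.cong) (auto simp: e_def)
        also have "\<dots> = (\<Sum>j\<in>{j\<in>{..<M}. H i j = s}. w j)" by (rule sum.inter_filter[symmetric]) simp
        also have "{j\<in>{..<M}. H i j = s} = {j. j<M \<and> H i j = s}" by auto
        finally show ?thesis .
      qed
      ultimately show ?thesis by simp
    qed
    moreover have "(\<Sum>j<M. w j) = 0"
    proof -
      have "g one = 0" using g(2) unfolding G_def by blast
      moreover have "g one = (\<Sum>j<M. one j * w j)" by (rule ev) (auto simp: one_def)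
      ultimately show ?thesis by (simp add: one_def)
    qed
    moreover have "(\<Sum>j<M. w j * d j) = 1"
    proof -
      have "g d' = (\<Sum>j<M. d' j * w j)" by (rule ev) (auto simp: d'_def)
      then show ?thesis using g(3) by (simp add: d'_def mult.commute)
    qed
    ultimately show ?thesis by blast
  qed
qed


lemma mkpmf:
  fixes M :: nat and qf :: "nat \<Rightarrow> real"
  assumes "\<forall>j<M. qf j \<ge> 0" "(\<Sum>j<M. qf j) = 1"
  shows "\<exists>q. set_pmf q \<subseteq> {..<M} \<and> (\<forall>j<M. pmf q j = qf j)"
proof -
  define xs where "xs = map (\<lambda>j. (j, qf j)) [0..<M]"
  have "sum_list (map snd xs) = (\<Sum>j<M. qf j)"
    unfolding xs_def by (simp add: interv_sum_list_conv_sum_set_nat atLeast0LessThan o_def)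
  then have wf: "pmf_of_list_wf xs"
    unfolding pmf_of_list_wf_def using assms by (auto simp: xs_def)
  have "set_pmf (pmf_of_list xs) \<subseteq> {..<M}"
    using set_pmf_of_list[OF wf] by (auto simp: xs_def)
  moreover have "pmf (pmf_of_list xs) j = qf j" if "j < M" for j
  proof -
    have "pmf (pmf_of_list xs) j = sum_list (map snd (filter (\<lambda>z. fst z = j) xs))"
      by (rule pmf_pmf_of_list[OF wf])
    also have "\<dots> = sum_list (map qf (filter (\<lambda>i. i = j) [0..<M]))"
      unfolding xs_def by (simp add: filter_map o_def)
    also have "\<dots> = sum qf (set (filter (\<lambda>i. i = j) [0..<M]))"
      by (rule sum_list_distinct_conv_sum_set) simp
    also have "set (filter (\<lambda>i. i = j) [0..<M]) = {j}" using that by auto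
    finally show ?thesis by simp
  qed
  ultimately show ?thesis by blast
qed

lemma exp_fin_supp:
  fixes q :: "nat pmf"
  assumes "set_pmf q \<subseteq> {..<M}"
  shows "E q g = (\<Sum>j<M. pmf q j * g j)"
proof -
  have "E q g = (\<Sum>j<M. g j * pmf q j)"
    by (rule integral_measure_pmf_real) (use assms in auto)
  then show ?thesis by (simp add: mult.commute)
qed

lemma pmf_map_fin_supp:
  fixes q :: "nat pmf"
  assumes "set_pmf q \<subseteq> {..<M}"
  shows "pmf (map_pmf f q) s = (\<Sum>j\<in>{j. j<M \<and> f j = s}. pmf q j)"
proof -
  have "pmf (map_pmf f q) s = measure q (f -` {s})" by (rule pmf_map)
  also have "\<dots> = measure q (f -` {s} \<inter> set_pmf q)" by (rule measure_Int_set_pmf[symmetric])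
  also have "\<dots> = measure q ((f -` {s} \<inter> {..<M}) \<inter> set_pmf q)"
    using assms by (intro arg_cong[where f="measure q"]) auto
  also have "\<dots> = measure q (f -` {s} \<inter> {..<M})" by (rule measure_Int_set_pmf)
  also have "\<dots> = sum (pmf q) (f -` {s} \<inter> {..<M})" by (rule measure_measure_pmf_finite) simp
  also have "f -` {s} \<inter> {..<M} = {j. j<M \<and> f j = s}" by auto
  finally show ?thesis .
qed

lemma JH_fst_Suc: "map_pmf fst (JH H \<sigma> q (Suc T)) =
  bind_pmf (map_pmf fst (JH H \<sigma> q T)) (\<lambda>h. bind_pmf (\<sigma> h) (\<lambda>i. map_pmf (\<lambda>s. h @ [(i,s)]) (map_pmf (H i) q)))"
  by (simp add: map_bind_pmf bind_map_pmf pmf.map_comp o_def)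

lemma JH_fst_eq:
  assumes "valid_strategy 2 \<sigma>" "\<forall>i<2. map_pmf (H i) q1 = map_pmf (H i) q2"
  shows "map_pmf fst (JH H \<sigma> q1 T) = map_pmf fst (JH H \<sigma> q2 T)"
proof (induction T)
  case 0 then show ?case by simp
next
  case (Suc T)
  show ?case unfolding JH_fst_Suc Suc
  proof (intro bind_pmf_cong refl)
    fix h i assume "i \<in> set_pmf (\<sigma> h)"
    then have "i < 2" using assms(1) unfolding valid_strategy_def by blast
    then show "map_pmf (\<lambda>s. h @ [(i, s)]) (map_pmf (H i) q1) = map_pmf (\<lambda>s. h @ [(i, s)]) (map_pmf (H i) q2)"
      using assms(2) by simp
  qed
qed

definition nact :: "(nat\<Rightarrow>nat\<Rightarrow>real) \<Rightarrow> strategy \<Rightarrow> nat pmf \<Rightarrow> nat \<Rightarrow> real" where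
  "nact H \<sigma> q T = (\<Sum>t<T. E (map_pmf fst (JH H \<sigma> q t)) (\<lambda>h. pmf (\<sigma> h) 0))"

lemma avg_lin:
  assumes "valid_strategy 2 \<sigma>" "finite (set_pmf q)"
  shows "E (Pq q T) (\<lambda>xs. regret 2 L H \<sigma> (Jx xs) T) \<ge>
     T * E q (L 1) + (E q (L 0) - E q (L 1)) * nact H \<sigma> q T - T * min (E q (L 0)) (E q (L 1))"
proof -
  define \<mu>0 where "\<mu>0 = E q (L 0)"
  define \<mu>1 where "\<mu>1 = E q (L 1)"
  have "E (JH H \<sigma> q T) (lossJ L T) = (\<Sum>t<T. E (JH H \<sigma> q t) (\<lambda>p. E (\<sigma> (fst p)) (\<lambda>i. E q (L i))))"
    by (rule JH_loss[OF assms])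
  also have "\<dots> = (\<Sum>t<T. \<mu>1 + (\<mu>0 - \<mu>1) * E (map_pmf fst (JH H \<sigma> q t)) (\<lambda>h. pmf (\<sigma> h) 0))"
  proof (rule sum.cong[OF refl])
    fix t
    have "E (\<sigma> h) (\<lambda>i. E q (L i)) = \<mu>1 + (\<mu>0 - \<mu>1) * pmf (\<sigma> h) 0" for h
    proof -
      have p1: "pmf (\<sigma> h) 1 = 1 - pmf (\<sigma> h) 0" using pmf_sigma2[OF assms(1), of h] by simp
      show ?thesis unfolding exp_sigma2[OF assms(1)] p1 \<mu>0_def \<mu>1_def by (simp add: algebra_simps)
    qed
    then have "E (JH H \<sigma> q t) (\<lambda>p. E (\<sigma> (fst p)) (\<lambda>i. E q (L i))) =
        E (JH H \<sigma> q t) (\<lambda>p. \<mu>1 + (\<mu>0 - \<mu>1) * pmf (\<sigma> (fst p)) 0)" by simp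
    also have "\<dots> = \<mu>1 + (\<mu>0 - \<mu>1) * E (JH H \<sigma> q t) (\<lambda>p. pmf (\<sigma> (fst p)) 0)"
      by (simp add: exp_add_const JH_fin[OF assms])
    finally show "E (JH H \<sigma> q t) (\<lambda>p. E (\<sigma> (fst p)) (\<lambda>i. E q (L i))) =
       \<mu>1 + (\<mu>0 - \<mu>1) * E (map_pmf fst (JH H \<sigma> q t)) (\<lambda>h. pmf (\<sigma> h) 0)" by simp
  qed
  also have "\<dots> = T * \<mu>1 + (\<mu>0 - \<mu>1) * nact H \<sigma> q T"
    by (simp add: sum.distrib nact_def sum_distrib_left)
  finally have loss: "E (JH H \<sigma> q T) (lossJ L T) = T * \<mu>1 + (\<mu>0 - \<mu>1) * nact H \<sigma> q T" .
  have m0: "E (Pq q T) (\<lambda>xs. min (sum_list (map (L 0) xs)) (sum_list (map (L 1) xs))) \<le> T * \<mu>0"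
  proof -
    have "E (Pq q T) (\<lambda>xs. min (sum_list (map (L 0) xs)) (sum_list (map (L 1) xs))) \<le> E (Pq q T) (\<lambda>xs. sum_list (map (L 0) xs))"
      by (rule exp_mono[OF Pq_fin[OF assms(2)]]) simp
    then show ?thesis by (simp add: exp_Pq_sum[OF assms(2)] \<mu>0_def)
  qed
  have m1: "E (Pq q T) (\<lambda>xs. min (sum_list (map (L 0) xs)) (sum_list (map (L 1) xs))) \<le> T * \<mu>1"
  proof -
    have "E (Pq q T) (\<lambda>xs. min (sum_list (map (L 0) xs)) (sum_list (map (L 1) xs))) \<le> E (Pq q T) (\<lambda>xs. sum_list (map (L 1) xs))"
      by (rule exp_mono[OF Pq_fin[OF assms(2)]]) simp
    then show ?thesis by (simp add: exp_Pq_sum[OF assms(2)] \<mu>1_def)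
  qed
  have "T * min \<mu>0 \<mu>1 = min (T * \<mu>0) (T * \<mu>1)" by (simp add: min_mult_distrib_left)
  then have mn: "E (Pq q T) (\<lambda>xs. min (sum_list (map (L 0) xs)) (sum_list (map (L 1) xs))) \<le> T * min \<mu>0 \<mu>1"
    using m0 m1 by simp
  show ?thesis
    unfolding avg_regret[OF assms] loss using mn unfolding \<mu>0_def \<mu>1_def by linarith
qed

lemma linLB:
  assumes "valid_strategy 2 \<sigma>" "finite (set_pmf q1)" "finite (set_pmf q2)"
    "\<forall>i<2. map_pmf (H i) q1 = map_pmf (H i) q2"
    "E q1 (\<lambda>j. L 0 j - L 1 j) = \<epsilon>" "E q2 (\<lambda>j. L 0 j - L 1 j) = - \<epsilon>" "\<epsilon> \<ge> 0"
  shows "E (Pq q1 T) (\<lambda>xs. regret 2 L H \<sigma> (Jx xs) T) + E (Pq q2 T) (\<lambda>xs. regret 2 L H \<sigma> (Jx xs) T) \<ge> T * \<epsilon>"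
proof -
  have n: "nact H \<sigma> q1 T = nact H \<sigma> q2 T"
    unfolding nact_def using JH_fst_eq[OF assms(1,4)] by simp
  have e1: "E q1 (L 0) - E q1 (L 1) = \<epsilon>" using assms(5) by (simp add: exp_diff assms(2))
  have e2: "E q2 (L 0) - E q2 (L 1) = - \<epsilon>" using assms(6) by (simp add: exp_diff assms(3))
  have min1: "min (E q1 (L 0)) (E q1 (L 1)) = E q1 (L 1)" using e1 assms(7) by simp
  have min2: "min (E q2 (L 0)) (E q2 (L 1)) = E q2 (L 1) - \<epsilon>" using e2 assms(7) by simp
  have a1: "E (Pq q1 T) (\<lambda>xs. regret 2 L H \<sigma> (Jx xs) T) \<ge> \<epsilon> * nact H \<sigma> q1 T"
    using avg_lin[OF assms(1,2), where T=T and L=L and H=H] unfolding e1 min1 by (simp add: algebra_simps)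
  have a2: "E (Pq q2 T) (\<lambda>xs. regret 2 L H \<sigma> (Jx xs) T) \<ge> T * \<epsilon> - \<epsilon> * nact H \<sigma> q2 T"
    using avg_lin[OF assms(1,3), where T=T and L=L and H=H] unfolding e2 min2 by (simp add: algebra_simps)
  show ?thesis using a1 a2 unfolding n by linarith
qed


definition Wt :: "real \<Rightarrow> real \<times> real \<Rightarrow> real" where
  "Wt \<eta> X = exp (- \<eta> * fst X) + exp (- \<eta> * snd X)"

definition pr :: "real \<Rightarrow> real \<times> real \<Rightarrow> nat \<Rightarrow> real" where
  "pr \<eta> X i = (if i = 0 then exp (- \<eta> * fst X) else exp (- \<eta> * snd X)) / Wt \<eta> X"

definition ph :: "(nat \<Rightarrow> real \<Rightarrow> real) \<Rightarrow> nat \<Rightarrow> real \<Rightarrow> real" where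
  "ph \<phi> i s = max 0 (\<phi> i s)"

definition upd :: "real \<Rightarrow> (nat \<Rightarrow> real \<Rightarrow> real) \<Rightarrow> real \<times> real \<Rightarrow> nat \<times> real \<Rightarrow> real \<times> real" where
  "upd \<eta> \<phi> X x = (if fst x = 0 then (fst X + ph \<phi> 0 (snd x) / pr \<eta> X 0, snd X)
                   else (fst X, snd X + ph \<phi> (fst x) (snd x) / pr \<eta> X (fst x)))"

definition stp :: "real \<Rightarrow> (nat \<Rightarrow> real \<Rightarrow> real) \<Rightarrow> (real \<times> real) \<times> real \<Rightarrow> nat \<times> real \<Rightarrow> (real \<times> real) \<times> real" where
  "stp \<eta> \<phi> Y x = (upd \<eta> \<phi> (fst Y) x, snd Y + (ph \<phi> (fst x) (snd x))^2 / pr \<eta> (fst Y) (fst x))"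

definition run :: "real \<Rightarrow> (nat \<Rightarrow> real \<Rightarrow> real) \<Rightarrow> (nat \<times> real) list \<Rightarrow> (real \<times> real) \<times> real" where
  "run \<eta> \<phi> h = foldl (stp \<eta> \<phi>) ((0,0),0) h"

definition Sv :: "(nat \<Rightarrow> real \<Rightarrow> real) \<Rightarrow> (nat \<times> real) list \<Rightarrow> real" where
  "Sv \<phi> h = sum_list (map (\<lambda>x. ph \<phi> (fst x) (snd x)) h)"

definition sE :: "real \<Rightarrow> (nat \<Rightarrow> real \<Rightarrow> real) \<Rightarrow> strategy" where
  "sE \<eta> \<phi> h = twopt (pr \<eta> (fst (run \<eta> \<phi> h)) 0) 0 1"

lemma Wt_pos: "Wt \<eta> X > 0" unfolding Wt_def by (simp add: add_pos_pos)

lemma pr_pos: "pr \<eta> X i > 0" unfolding pr_def using Wt_pos by simp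

lemma pr_sum: "pr \<eta> X 0 + pr \<eta> X 1 = 1"
  unfolding pr_def using Wt_pos[of \<eta> X] by (simp add: Wt_def add_divide_distrib[symmetric])

lemma pr_ne0: "i \<noteq> 0 \<Longrightarrow> pr \<eta> X i = pr \<eta> X 1" unfolding pr_def by simp

lemma pr_le1: "pr \<eta> X 0 \<le> 1" using pr_sum[of \<eta> X] pr_pos[of \<eta> X 1] by linarith

lemma ph_nn: "ph \<phi> i s \<ge> 0" unfolding ph_def by simp

lemma run_app: "run \<eta> \<phi> (h @ [x]) = stp \<eta> \<phi> (run \<eta> \<phi> h) x"
  unfolding run_def by simp

lemma Sv_app: "Sv \<phi> (h @ [x]) = Sv \<phi> h + ph \<phi> (fst x) (snd x)"
  unfolding Sv_def by simp

lemma sE_valid: "valid_strategy 2 (sE \<eta> \<phi>)"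
  unfolding valid_strategy_def sE_def using twopt_set by fastforce

lemma sE_exp: "E (sE \<eta> \<phi> h) g = pr \<eta> (fst (run \<eta> \<phi> h)) 0 * g 0 + (1 - pr \<eta> (fst (run \<eta> \<phi> h)) 0) * g 1"
  unfolding sE_def by (rule twopt_exp) (simp_all add: less_imp_le[OF pr_pos] pr_le1)

lemma exp_neg_quad: "(y::real) \<ge> 0 \<Longrightarrow> exp (- y) \<le> 1 - y + y^2 / 2"
proof -
  assume y: "y \<ge> 0"
  have a: "1 + y + y^2/2 \<le> exp y" by (rule exp_lower_Taylor_quadratic[OF y])
  have p: "1 + y + y^2/2 > 0" using y by (simp add: add_pos_nonneg)
  have "exp (- y) = 1 / exp y" by (simp add: exp_minus')
  also have "\<dots> \<le> 1 / (1 + y + y^2/2)" by (rule divide_left_mono[OF a]) (use p in auto)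
  also have "\<dots> \<le> 1 - y + y^2 / 2"
  proof -
    have "1 \<le> (1 - y + y^2/2) * (1 + y + y^2/2)"
      by (simp add: algebra_simps power2_eq_square power4_eq_xxxx) (simp add: mult_nonneg_nonneg y)
    then show ?thesis using p by (simp add: divide_le_eq)
  qed
  finally show ?thesis .
qed

lemma step_pot:
  assumes eta: "\<eta> > 0"
  shows "ln (Wt \<eta> (upd \<eta> \<phi> X x)) \<le> ln (Wt \<eta> X) - \<eta> * ph \<phi> (fst x) (snd x)
           + \<eta>^2 * (ph \<phi> (fst x) (snd x))^2 / (2 * pr \<eta> X (fst x))"
proof -
  define a where "a = fst X"
  define b where "b = snd X"
  define l where "l = ph \<phi> (fst x) (snd x)"
  define p where "p = pr \<eta> X (fst x)"
  define w where "w = Wt \<eta> X"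
  have l: "l \<ge> 0" unfolding l_def by (rule ph_nn)
  have p: "p > 0" unfolding p_def by (rule pr_pos)
  have w: "w > 0" unfolding w_def by (rule Wt_pos)
  define y where "y = \<eta> * l / p"
  have y: "y \<ge> 0" unfolding y_def using eta l p by simp
  define wi where "wi = (if fst x = 0 then exp (- \<eta> * a) else exp (- \<eta> * b))"
  define wo where "wo = (if fst x = 0 then exp (- \<eta> * b) else exp (- \<eta> * a))"
  have wwi: "w = wi + wo" unfolding w_def wi_def wo_def Wt_def a_def b_def by auto
  have pwi: "p = wi / w" unfolding p_def pr_def wi_def w_def a_def b_def by auto
  have new: "Wt \<eta> (upd \<eta> \<phi> X x) = wi * exp (- y) + wo"
  proof (cases "fst x = 0")
    case True
    have "- \<eta> * (a + l / p) = (- \<eta> * a) + (- y)" unfolding y_def by (simp add: algebra_simps)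
    then have "exp (- \<eta> * (a + l / p)) = exp (- \<eta> * a) * exp (- y)"
      by (simp only: Transcendental.exp_add)
    then show ?thesis using True unfolding Wt_def upd_def wi_def wo_def a_def b_def l_def p_def by simp
  next
    case False
    have "- \<eta> * (b + l / p) = (- \<eta> * b) + (- y)" unfolding y_def by (simp add: algebra_simps)
    then have "exp (- \<eta> * (b + l / p)) = exp (- \<eta> * b) * exp (- y)"
      by (simp only: Transcendental.exp_add)
    then show ?thesis using False unfolding Wt_def upd_def wi_def wo_def a_def b_def l_def p_def by simp
  qed
  have wi: "wi > 0" unfolding wi_def by simp
  have wo: "wo > 0" unfolding wo_def by simp
  have "wi * exp (- y) + wo \<le> wi * (1 - y + y^2/2) + wo"
    using exp_neg_quad[OF y] wi by simp
  also have "\<dots> = w * (1 - \<eta> * l + \<eta>^2 * l^2 / (2 * p))"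
  proof -
    have e1: "wi = p * w" using pwi w by simp
    have e2: "wo = w - p * w" using wwi e1 by simp
    show ?thesis unfolding y_def e1 e2 using p w
      by (simp add: field_simps power2_eq_square)
  qed
  finally have le: "Wt \<eta> (upd \<eta> \<phi> X x) \<le> w * (1 - \<eta> * l + \<eta>^2 * l^2 / (2 * p))" unfolding new .
  have pos: "Wt \<eta> (upd \<eta> \<phi> X x) > 0" by (rule Wt_pos)
  then have q: "1 - \<eta> * l + \<eta>^2 * l^2 / (2 * p) > 0" using le w
    by (metis less_le_trans mult_pos_pos zero_less_mult_pos)
  have "ln (Wt \<eta> (upd \<eta> \<phi> X x)) \<le> ln (w * (1 - \<eta> * l + \<eta>^2 * l^2 / (2 * p)))"
    using le pos by simp
  also have "\<dots> = ln w + ln (1 - \<eta> * l + \<eta>^2 * l^2 / (2 * p))" using w q by (simp add: ln_mult)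
  also have "\<dots> \<le> ln w + (- \<eta> * l + \<eta>^2 * l^2 / (2 * p))"
    using ln_le_minus_one[OF q] by simp
  finally show ?thesis unfolding w_def l_def p_def by simp
qed

lemma path_pot:
  assumes "\<eta> > 0"
  shows "ln (Wt \<eta> (fst (run \<eta> \<phi> h))) \<le> ln 2 - \<eta> * Sv \<phi> h + \<eta>^2 / 2 * snd (run \<eta> \<phi> h)"
proof (induction h rule: rev_induct)
  case Nil then show ?case by (simp add: run_def Wt_def Sv_def)
next
  case (snoc x h)
  have "ln (Wt \<eta> (fst (run \<eta> \<phi> (h @ [x])))) = ln (Wt \<eta> (upd \<eta> \<phi> (fst (run \<eta> \<phi> h)) x))"
    by (simp add: run_app stp_def)
  also have "\<dots> \<le> ln (Wt \<eta> (fst (run \<eta> \<phi> h))) - \<eta> * ph \<phi> (fst x) (snd x)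
           + \<eta>^2 * (ph \<phi> (fst x) (snd x))^2 / (2 * pr \<eta> (fst (run \<eta> \<phi> h)) (fst x))"
    by (rule step_pot[OF assms])
  also have "\<dots> \<le> ln 2 - \<eta> * Sv \<phi> (h @ [x]) + \<eta>^2 / 2 * snd (run \<eta> \<phi> (h @ [x]))"
    using snoc by (simp add: run_app stp_def Sv_app algebra_simps)
  finally show ?case .
qed

lemma pot_lower:
  assumes "\<eta> > 0"
  shows "- \<eta> * fst X \<le> ln (Wt \<eta> X)" "- \<eta> * snd X \<le> ln (Wt \<eta> X)"
proof -
  have "exp (- \<eta> * fst X) \<le> Wt \<eta> X" unfolding Wt_def by simp
  then have "ln (exp (- \<eta> * fst X)) \<le> ln (Wt \<eta> X)" by (subst ln_le_cancel_iff) (auto simp: Wt_pos)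
  then show "- \<eta> * fst X \<le> ln (Wt \<eta> X)" by simp
  have "exp (- \<eta> * snd X) \<le> Wt \<eta> X" unfolding Wt_def by simp
  then have "ln (exp (- \<eta> * snd X)) \<le> ln (Wt \<eta> X)" by (subst ln_le_cancel_iff) (auto simp: Wt_pos)
  then show "- \<eta> * snd X \<le> ln (Wt \<eta> X)" by simp
qed

lemma ln2_le1: "ln (2::real) \<le> 1" using ln_le_minus_one[of 2] by simp

lemma Sv_bound:
  assumes "\<eta> > 0" "(k::nat) < 2"
  shows "Sv \<phi> h \<le> (if k = 0 then fst (fst (run \<eta> \<phi> h)) else snd (fst (run \<eta> \<phi> h))) + 1 / \<eta> + \<eta> / 2 * snd (run \<eta> \<phi> h)"
proof -
  have p: "ln (Wt \<eta> (fst (run \<eta> \<phi> h))) \<le> 1 - \<eta> * Sv \<phi> h + \<eta>^2 / 2 * snd (run \<eta> \<phi> h)"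
    using path_pot[OF assms(1), of \<phi> h] ln2_le1 by linarith
  have lo: "- \<eta> * (if k = 0 then fst (fst (run \<eta> \<phi> h)) else snd (fst (run \<eta> \<phi> h))) \<le> ln (Wt \<eta> (fst (run \<eta> \<phi> h)))"
    using pot_lower[OF assms(1)] by simp
  have "\<eta> * Sv \<phi> h \<le> \<eta> * ((if k = 0 then fst (fst (run \<eta> \<phi> h)) else snd (fst (run \<eta> \<phi> h))) + 1 / \<eta> + \<eta> / 2 * snd (run \<eta> \<phi> h))"
    using p lo assms(1) by (simp add: algebra_simps power2_eq_square)
  then show ?thesis using assms(1) by simp
qed


lemma fst_run_app: "fst (run \<eta> \<phi> (h @ [x])) = upd \<eta> \<phi> (fst (run \<eta> \<phi> h)) x"
  by (simp add: run_app stp_def)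

lemma snd_run_app: "snd (run \<eta> \<phi> (h @ [x])) = snd (run \<eta> \<phi> h) + (ph \<phi> (fst x) (snd x))^2 / pr \<eta> (fst (run \<eta> \<phi> h)) (fst x)"
  by (simp add: run_app stp_def)

lemma hist_sE_Suc:
  "E (hist H (sE \<eta> \<phi>) J (Suc T)) F = E (hist H (sE \<eta> \<phi>) J T) (\<lambda>h.
      pr \<eta> (fst (run \<eta> \<phi> h)) 0 * F (h @ [(0, H 0 (J T))]) + (1 - pr \<eta> (fst (run \<eta> \<phi> h)) 0) * F (h @ [(1, H 1 (J T))]))"
  by (subst hist_exp_Suc[OF sE_valid]) (simp add: sE_exp)

lemma pr1: "pr \<eta> X 1 = 1 - pr \<eta> X 0" using pr_sum[of \<eta> X] by simp
lemma pr1': "pr \<eta> X (Suc 0) = 1 - pr \<eta> X 0" using pr1 by simp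

lemma EX0: "E (hist H (sE \<eta> \<phi>) J T) (\<lambda>h. fst (fst (run \<eta> \<phi> h))) = (\<Sum>t<T. ph \<phi> 0 (H 0 (J t)))"
proof (induction T)
  case 0 then show ?case by (simp add: run_def)
next
  case (Suc T)
  have "E (hist H (sE \<eta> \<phi>) J (Suc T)) (\<lambda>h. fst (fst (run \<eta> \<phi> h))) =
     E (hist H (sE \<eta> \<phi>) J T) (\<lambda>h. fst (fst (run \<eta> \<phi> h)) + ph \<phi> 0 (H 0 (J T)))"
    unfolding hist_sE_Suc
  proof (rule exp_cong)
    fix h
    define p where "p = pr \<eta> (fst (run \<eta> \<phi> h)) 0"
    have p: "p > 0" unfolding p_def by (rule pr_pos)
    show "pr \<eta> (fst (run \<eta> \<phi> h)) 0 * fst (fst (run \<eta> \<phi> (h @ [(0, H 0 (J T))]))) +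
       (1 - pr \<eta> (fst (run \<eta> \<phi> h)) 0) * fst (fst (run \<eta> \<phi> (h @ [(1, H 1 (J T))]))) =
       fst (fst (run \<eta> \<phi> h)) + ph \<phi> 0 (H 0 (J T))"
      unfolding fst_run_app upd_def p_def[symmetric] using p by (simp add: field_simps)
  qed
  also have "\<dots> = E (hist H (sE \<eta> \<phi>) J T) (\<lambda>h. fst (fst (run \<eta> \<phi> h))) + ph \<phi> 0 (H 0 (J T))"
    by (simp add: exp_add hist_fin[OF sE_valid])
  finally show ?case using Suc by simp
qed

lemma EX1: "E (hist H (sE \<eta> \<phi>) J T) (\<lambda>h. snd (fst (run \<eta> \<phi> h))) = (\<Sum>t<T. ph \<phi> 1 (H 1 (J t)))"
proof (induction T)
  case 0 then show ?case by (simp add: run_def)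
next
  case (Suc T)
  have "E (hist H (sE \<eta> \<phi>) J (Suc T)) (\<lambda>h. snd (fst (run \<eta> \<phi> h))) =
     E (hist H (sE \<eta> \<phi>) J T) (\<lambda>h. snd (fst (run \<eta> \<phi> h)) + ph \<phi> 1 (H 1 (J T)))"
    unfolding hist_sE_Suc
  proof (rule exp_cong)
    fix h
    define p where "p = pr \<eta> (fst (run \<eta> \<phi> h)) 0"
    have p: "1 - p > 0" unfolding p_def using pr_pos[of \<eta> _ 1] pr1 by metis
    show "pr \<eta> (fst (run \<eta> \<phi> h)) 0 * snd (fst (run \<eta> \<phi> (h @ [(0, H 0 (J T))]))) +
       (1 - pr \<eta> (fst (run \<eta> \<phi> h)) 0) * snd (fst (run \<eta> \<phi> (h @ [(1, H 1 (J T))]))) =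
       snd (fst (run \<eta> \<phi> h)) + ph \<phi> 1 (H 1 (J T))"
      unfolding fst_run_app using p by (simp add: upd_def pr1' p_def[symmetric] field_simps)
  qed
  also have "\<dots> = E (hist H (sE \<eta> \<phi>) J T) (\<lambda>h. snd (fst (run \<eta> \<phi> h))) + ph \<phi> 1 (H 1 (J T))"
    by (simp add: exp_add hist_fin[OF sE_valid])
  finally show ?case using Suc by simp
qed

lemma EQ: "E (hist H (sE \<eta> \<phi>) J T) (\<lambda>h. snd (run \<eta> \<phi> h)) = (\<Sum>t<T. (ph \<phi> 0 (H 0 (J t)))^2 + (ph \<phi> 1 (H 1 (J t)))^2)"
proof (induction T)
  case 0 then show ?case by (simp add: run_def)
next
  case (Suc T)
  have "E (hist H (sE \<eta> \<phi>) J (Suc T)) (\<lambda>h. snd (run \<eta> \<phi> h)) =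
     E (hist H (sE \<eta> \<phi>) J T) (\<lambda>h. snd (run \<eta> \<phi> h) + ((ph \<phi> 0 (H 0 (J T)))^2 + (ph \<phi> 1 (H 1 (J T)))^2))"
    unfolding hist_sE_Suc
  proof (rule exp_cong)
    fix h
    define p where "p = pr \<eta> (fst (run \<eta> \<phi> h)) 0"
    have p0: "p > 0" unfolding p_def by (rule pr_pos)
    have p: "1 - p > 0" unfolding p_def using pr_pos[of \<eta> _ 1] pr1 by metis
    show "pr \<eta> (fst (run \<eta> \<phi> h)) 0 * snd (run \<eta> \<phi> (h @ [(0, H 0 (J T))])) +
       (1 - pr \<eta> (fst (run \<eta> \<phi> h)) 0) * snd (run \<eta> \<phi> (h @ [(1, H 1 (J T))])) =
       snd (run \<eta> \<phi> h) + ((ph \<phi> 0 (H 0 (J T)))^2 + (ph \<phi> 1 (H 1 (J T)))^2)"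
      unfolding snd_run_app using p p0 by (simp add: pr1' p_def[symmetric] field_simps)
  qed
  also have "\<dots> = E (hist H (sE \<eta> \<phi>) J T) (\<lambda>h. snd (run \<eta> \<phi> h)) + ((ph \<phi> 0 (H 0 (J T)))^2 + (ph \<phi> 1 (H 1 (J T)))^2)"
    by (simp add: exp_add hist_fin[OF sE_valid])
  finally show ?case using Suc by simp
qed


lemma exp3_bound:
  assumes eta: "\<eta> > 0" and J: "valid_outcomes M J"
    and Lrep: "\<forall>i<2. \<forall>j<M. L i j = \<phi> i (H i j) - c j"
    and phb: "\<forall>i<2. \<forall>j<M. 0 \<le> \<phi> i (H i j) \<and> \<phi> i (H i j) \<le> B"
  shows "regret 2 L H (sE \<eta> \<phi>) J T \<le> 1/\<eta> + \<eta> * T * B^2"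
proof -
  let ?h = "hist H (sE \<eta> \<phi>) J T"
  define C where "C = (\<Sum>t<T. c (J t))"
  define l where "l k = (\<Sum>t<T. ph \<phi> k (H k (J t)))" for k
  have Jt: "J t < M" for t using J unfolding valid_outcomes_def by blast
  have phe: "ph \<phi> i (H i (J t)) = \<phi> i (H i (J t))" if "i < 2" for i t
    using phb that Jt[of t] unfolding ph_def by auto
  have Lk: "(\<Sum>t<T. L k (J t)) = l k - C" if "k < 2" for k
  proof -
    have "(\<Sum>t<T. L k (J t)) = (\<Sum>t<T. ph \<phi> k (H k (J t)) - c (J t))"
      using Lrep that Jt phe by (intro sum.cong) auto
    then show ?thesis unfolding l_def C_def by (simp add: sum_subtractf)
  qed
  have "E ?h (\<lambda>h. \<Sum>t<T. L (fst (h ! t)) (J t)) = E ?h (\<lambda>h. Sv \<phi> h - C)"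
  proof (rule exp_cong)
    fix h assume "h \<in> set_pmf ?h"
    then have hs: "length h = T" "\<forall>t<T. fst (h!t) < 2 \<and> snd (h!t) = H (fst (h!t)) (J t)"
      using hist_supp[OF sE_valid] by blast+
    have "Sv \<phi> h = (\<Sum>t<T. ph \<phi> (fst (h!t)) (snd (h!t)))"
      unfolding Sv_def sum_list_nth using hs(1) by simp
    also have "\<dots> = (\<Sum>t<T. L (fst (h!t)) (J t) + c (J t))"
      using hs(2) Lrep phe Jt by (intro sum.cong) auto
    finally show "(\<Sum>t<T. L (fst (h ! t)) (J t)) = Sv \<phi> h - C"
      unfolding C_def by (simp add: sum.distrib)
  qed
  also have "\<dots> = E ?h (Sv \<phi>) - C" by (simp add: exp_diff hist_fin[OF sE_valid])
  finally have loss: "E ?h (\<lambda>h. \<Sum>t<T. L (fst (h ! t)) (J t)) = E ?h (Sv \<phi>) - C" .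
  define Qs where "Qs = (\<Sum>t<T. (ph \<phi> 0 (H 0 (J t)))^2 + (ph \<phi> 1 (H 1 (J t)))^2)"
  have fin: "finite (set_pmf ?h)" by (rule hist_fin[OF sE_valid])
  have b0: "E ?h (Sv \<phi>) \<le> l 0 + 1/\<eta> + \<eta>/2 * Qs"
  proof -
    have "E ?h (Sv \<phi>) \<le> E ?h (\<lambda>h. fst (fst (run \<eta> \<phi> h)) + 1/\<eta> + \<eta>/2 * snd (run \<eta> \<phi> h))"
      by (rule exp_mono[OF fin]) (use Sv_bound[OF eta, of 0] in simp)
    also have "\<dots> = l 0 + 1/\<eta> + \<eta>/2 * Qs"
      by (simp add: exp_add fin EX0 EQ l_def Qs_def)
    finally show ?thesis .
  qed
  have b1: "E ?h (Sv \<phi>) \<le> l 1 + 1/\<eta> + \<eta>/2 * Qs"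
  proof -
    have "E ?h (Sv \<phi>) \<le> E ?h (\<lambda>h. snd (fst (run \<eta> \<phi> h)) + 1/\<eta> + \<eta>/2 * snd (run \<eta> \<phi> h))"
      by (rule exp_mono[OF fin]) (use Sv_bound[OF eta, of 1] in simp)
    also have "\<dots> = l 1 + 1/\<eta> + \<eta>/2 * Qs"
      by (simp add: exp_add fin EX1 EQ l_def Qs_def)
    finally show ?thesis .
  qed
  have qb: "Qs \<le> T * (2 * B^2)"
  proof -
    have "Qs \<le> (\<Sum>t<T. 2 * B^2)"
      unfolding Qs_def
    proof (rule sum_mono)
      fix t
      have "(ph \<phi> i (H i (J t)))^2 \<le> B^2" if "i < 2" for i
        using phb that Jt[of t] phe[OF that, of t] by (auto intro: power_mono)
      from this[of 0] this[of 1] show "(ph \<phi> 0 (H 0 (J t)))^2 + (ph \<phi> 1 (H 1 (J t)))^2 \<le> 2 * B^2" by simp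
    qed
    then show ?thesis by simp
  qed
  have "\<eta>/2 * Qs \<le> \<eta>/2 * (T * (2 * B^2))" using qb eta by (intro mult_left_mono) auto
  then have q2: "\<eta>/2 * Qs \<le> \<eta> * T * B^2" by simp
  have "regret 2 L H (sE \<eta> \<phi>) J T = E ?h (Sv \<phi>) - C - min (l 0 - C) (l 1 - C)"
    unfolding regret_def Min2 loss using Lk[of 0] Lk[of 1] by simp
  also have "\<dots> = E ?h (Sv \<phi>) - min (l 0) (l 1)" by (simp add: min_def)
  also have "\<dots> \<le> 1/\<eta> + \<eta> * T * B^2" using b0 b1 q2 by (simp add: min_def)
  finally show ?thesis .
qed

lemma exp3_minimax:
  assumes "M \<ge> 1" and Lrep: "\<forall>i<2. \<forall>j<M. L i j = \<phi> i (H i j) - c j"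
    and phb: "\<forall>i<2. \<forall>j<M. 0 \<le> \<phi> i (H i j) \<and> \<phi> i (H i j) \<le> B"
    and B: "B > 0" and T: "T \<ge> 1"
    and bb: "bdd_below ((\<lambda>\<sigma>. Sup ((\<lambda>J. regret 2 L H \<sigma> J T) ` {J. valid_outcomes M J})) ` {\<sigma>. valid_strategy 2 \<sigma>})"
  shows "minimax_regret 2 M L H T \<le> 2 * B * sqrt T"
proof -
  define \<eta> where "\<eta> = 1 / (B * sqrt T)"
  have sT: "sqrt T > 0" using T by simp
  have eta: "\<eta> > 0" unfolding \<eta>_def using B sT by simp
  have e: "1/\<eta> + \<eta> * T * B^2 = 2 * B * sqrt T"
  proof -
    have "real T = sqrt T * sqrt T" by simp
    then have "\<eta> * T * B^2 = B * sqrt T" unfolding \<eta>_def using B sT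
      by (simp add: field_simps power2_eq_square)
    moreover have "1/\<eta> = B * sqrt T" unfolding \<eta>_def by simp
    ultimately show ?thesis by simp
  qed
  have "Sup ((\<lambda>J. regret 2 L H (sE \<eta> \<phi>) J T) ` {J. valid_outcomes M J}) \<le> 2 * B * sqrt T"
  proof (rule cSup_least)
    have "valid_outcomes M (\<lambda>_. 0)" using assms(1) unfolding valid_outcomes_def by simp
    then show "(\<lambda>J. regret 2 L H (sE \<eta> \<phi>) J T) ` {J. valid_outcomes M J} \<noteq> {}" by blast
    fix x assume "x \<in> (\<lambda>J. regret 2 L H (sE \<eta> \<phi>) J T) ` {J. valid_outcomes M J}"
    then obtain J where J: "valid_outcomes M J" "x = regret 2 L H (sE \<eta> \<phi>) J T" by blast
    then show "x \<le> 2 * B * sqrt T" using exp3_bound[where \<eta>=\<eta> and M=M and J=J and L=L and \<phi>=\<phi> and H=H and c=c and B=B and T=T, OF eta J(1) Lrep phb] e by simp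
  qed
  moreover have "minimax_regret 2 M L H T \<le> Sup ((\<lambda>J. regret 2 L H (sE \<eta> \<phi>) J T) ` {J. valid_outcomes M J})"
    unfolding minimax_regret_def by (rule cInf_lower) (use sE_valid bb in auto)
  ultimately show ?thesis by linarith
qed


lemma hist_supp_A:
  assumes "\<forall>h. set_pmf (\<sigma> h) \<subseteq> A"
  shows "h \<in> set_pmf (hist H \<sigma> J T) \<Longrightarrow> length h = T \<and> (\<forall>t<T. fst (h!t) \<in> A)"
proof (induction T arbitrary: h)
  case 0 then show ?case by simp
next
  case (Suc T)
  then obtain h' i where h': "h' \<in> set_pmf (hist H \<sigma> J T)" "i \<in> set_pmf (\<sigma> h')"
    and h: "h = h' @ [(i, H i (J T))]" by auto
  have "i \<in> A" using h' assms by auto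
  with Suc.IH[OF h'(1)] show ?case
    by (auto simp: h nth_append less_Suc_eq)
qed

abbreviation Sups :: "nat \<Rightarrow> (nat\<Rightarrow>nat\<Rightarrow>real) \<Rightarrow> (nat\<Rightarrow>nat\<Rightarrow>real) \<Rightarrow> nat \<Rightarrow> strategy \<Rightarrow> real" where
  "Sups M L H T \<sigma> \<equiv> Sup ((\<lambda>J. regret 2 L H \<sigma> J T) ` {J. valid_outcomes M J})"

lemma bdd_reg:
  assumes "valid_strategy 2 \<sigma>" "\<forall>i<2. \<forall>j<M. 0 \<le> L i j \<and> L i j \<le> 1"
  shows "bdd_above ((\<lambda>J. regret 2 L H \<sigma> J T) ` {J. valid_outcomes M J})"
  using regret_le[OF assms(1) _ assms(2)] by (intro bdd_aboveI[of _ "real T"]) auto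

lemma reg_le_Sups:
  assumes "valid_strategy 2 \<sigma>" "\<forall>i<2. \<forall>j<M. 0 \<le> L i j \<and> L i j \<le> 1" "valid_outcomes M J"
  shows "regret 2 L H \<sigma> J T \<le> Sups M L H T \<sigma>"
  by (rule cSup_upper) (use assms bdd_reg[OF assms(1,2)] in auto)

lemma Sups_nn:
  assumes "valid_strategy 2 \<sigma>" "\<forall>i<2. \<forall>j<M. 0 \<le> L i j \<and> L i j \<le> 1" "M \<ge> 1"
  shows "0 \<le> Sups M L H T \<sigma>"
proof -
  have "valid_outcomes M (\<lambda>_. 0)" using assms(3) by (simp add: valid_outcomes_def)
  then show ?thesis using reg_le_Sups[OF assms(1,2)] regret_ge_const[OF assms(1)] by (meson order_trans)
qed

lemma minimax_lower:
  assumes "\<And>\<sigma>. valid_strategy 2 \<sigma> \<Longrightarrow> x \<le> Sups M L H T \<sigma>"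
  shows "x \<le> minimax_regret 2 M L H T"
  unfolding minimax_regret_def
proof (rule cInf_greatest)
  have "valid_strategy 2 (\<lambda>_. return_pmf 0)" by (simp add: valid_strategy_def)
  then show "(\<lambda>\<sigma>. Sups M L H T \<sigma>) ` {\<sigma>. valid_strategy 2 \<sigma>} \<noteq> {}" by blast
qed (use assms in auto)

lemma bdd_Sups:
  assumes "\<forall>i<2. \<forall>j<M. 0 \<le> L i j \<and> L i j \<le> 1" "M \<ge> 1"
  shows "bdd_below ((\<lambda>\<sigma>. Sups M L H T \<sigma>) ` {\<sigma>. valid_strategy 2 \<sigma>})"
  using Sups_nn[OF _ assms(1,2)] by (intro bdd_belowI[of _ 0]) auto

lemma zero_case:
  assumes "M \<ge> 1" "\<forall>i<2. \<forall>j<M. 0 \<le> L i j \<and> L i j \<le> 1" "k < 2" "\<forall>j<M. L k j \<le> L (1 - k) j"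
  shows "minimax_regret 2 M L H T = 0"
proof -
  define \<sigma>k where "\<sigma>k = (\<lambda>_::(nat\<times>real) list. return_pmf k)"
  have sub: "\<forall>h. set_pmf (\<sigma>k h) \<subseteq> {k}" unfolding \<sigma>k_def by simp
  have vk: "valid_strategy 2 \<sigma>k" unfolding valid_strategy_def \<sigma>k_def using assms(3) by simp
  have r0: "regret 2 L H \<sigma>k J T = 0" if J: "valid_outcomes M J" for J
  proof -
    have "E (hist H \<sigma>k J T) (\<lambda>h. \<Sum>t<T. L (fst (h ! t)) (J t)) = E (hist H \<sigma>k J T) (\<lambda>h. \<Sum>t<T. L k (J t))"
      by (rule exp_cong) (use hist_supp_A[OF sub] in auto)
    then have e: "E (hist H \<sigma>k J T) (\<lambda>h. \<Sum>t<T. L (fst (h ! t)) (J t)) = (\<Sum>t<T. L k (J t))" by simp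
    have le: "(\<Sum>t<T. L k (J t)) \<le> (\<Sum>t<T. L (1-k) (J t))"
      using assms(4) J unfolding valid_outcomes_def by (intro sum_mono) auto
    have "k = 0 \<or> k = 1" using assms(3) by auto
    then show ?thesis unfolding regret_def Min2 e using le by auto
  qed
  have "(\<lambda>J. regret 2 L H \<sigma>k J T) ` {J. valid_outcomes M J} = {0}"
  proof -
    have "valid_outcomes M (\<lambda>_. 0)" using assms(1) by (simp add: valid_outcomes_def)
    then show ?thesis using r0 by auto
  qed
  then have s0: "Sups M L H T \<sigma>k = 0" by simp
  show ?thesis unfolding minimax_regret_def
  proof (rule cInf_eq_minimum)
    show "0 \<in> (\<lambda>\<sigma>. Sups M L H T \<sigma>) ` {\<sigma>. valid_strategy 2 \<sigma>}" using s0 vk by force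
    fix x assume "x \<in> (\<lambda>\<sigma>. Sups M L H T \<sigma>) ` {\<sigma>. valid_strategy 2 \<sigma>}"
    then show "0 \<le> x" using Sups_nn[OF _ assms(2,1)] by auto
  qed
qed

definition tr :: "(nat \<Rightarrow> real \<Rightarrow> real) \<Rightarrow> (nat \<times> real) list \<Rightarrow> (nat \<times> real) list" where
  "tr \<phi> = map (\<lambda>x. (fst x, \<phi> (fst x) (snd x)))"

lemma hist_tr:
  "hist (\<lambda>i j. \<phi> i (H i j)) \<sigma> J T = map_pmf (tr \<phi>) (hist H (\<lambda>h. \<sigma> (tr \<phi> h)) J T)"
proof (induction T)
  case 0 then show ?case by (simp add: tr_def)
next
  case (Suc T)
  show ?case
    by (simp add: Suc map_bind_pmf bind_map_pmf pmf.map_comp o_def tr_def)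
qed

lemma easier_part:
  assumes Lrep: "\<forall>i<2. \<forall>j<M. L i j = \<phi> i (H i j) - c j"
  shows "easier 2 M L H (\<lambda>i j. \<phi> i (H i j)) (\<lambda>i j. \<phi> i (H i j))"
  unfolding easier_def
proof (intro allI impI)
  fix \<sigma> assume v: "valid_strategy 2 \<sigma>"
  define \<sigma>' where "\<sigma>' = (\<lambda>h. \<sigma> (tr \<phi> h))"
  have v': "valid_strategy 2 \<sigma>'" using v unfolding valid_strategy_def \<sigma>'_def by blast
  let ?L' = "\<lambda>i j. \<phi> i (H i j)"
  show "\<exists>\<sigma>'. valid_strategy 2 \<sigma>' \<and> (\<forall>J. valid_outcomes M J \<longrightarrow>
       (\<forall>T. actions H \<sigma>' J T = actions ?L' \<sigma> J T \<and> regret 2 L H \<sigma>' J T \<le> regret 2 ?L' ?L' \<sigma> J T))"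
  proof (intro exI[of _ \<sigma>'] conjI allI impI v')
    fix J T assume J: "valid_outcomes M J"
    have ht: "hist ?L' \<sigma> J T = map_pmf (tr \<phi>) (hist H \<sigma>' J T)" unfolding \<sigma>'_def by (rule hist_tr)
    show "actions H \<sigma>' J T = actions ?L' \<sigma> J T"
      unfolding actions_def ht by (simp add: pmf.map_comp o_def tr_def)
    define C where "C = (\<Sum>t<T. c (J t))"
    have Jt: "J t < M" for t using J unfolding valid_outcomes_def by blast
    have Lk: "(\<Sum>t<T. ?L' k (J t)) = (\<Sum>t<T. L k (J t)) + C" if "k < 2" for k
      unfolding C_def sum.distrib[symmetric] using Lrep that Jt by (intro sum.cong) auto
    have "E (hist ?L' \<sigma> J T) (\<lambda>h. \<Sum>t<T. ?L' (fst (h ! t)) (J t)) =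
        E (hist H \<sigma>' J T) (\<lambda>h. \<Sum>t<T. ?L' (fst (tr \<phi> h ! t)) (J t))"
      unfolding ht by simp
    also have "\<dots> = E (hist H \<sigma>' J T) (\<lambda>h. (\<Sum>t<T. L (fst (h ! t)) (J t)) + C)"
    proof (rule exp_cong)
      fix h assume "h \<in> set_pmf (hist H \<sigma>' J T)"
      then have hs: "length h = T" "\<forall>t<T. fst (h!t) < 2" using hist_supp[OF v'] by blast+
      show "(\<Sum>t<T. ?L' (fst (tr \<phi> h ! t)) (J t)) = (\<Sum>t<T. L (fst (h ! t)) (J t)) + C"
        unfolding C_def sum.distrib[symmetric] using hs Lrep Jt by (intro sum.cong) (auto simp: tr_def)
    qed
    also have "\<dots> = E (hist H \<sigma>' J T) (\<lambda>h. \<Sum>t<T. L (fst (h ! t)) (J t)) + C"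
      by (simp add: exp_add hist_fin[OF v'])
    finally have e: "E (hist ?L' \<sigma> J T) (\<lambda>h. \<Sum>t<T. ?L' (fst (h ! t)) (J t)) =
        E (hist H \<sigma>' J T) (\<lambda>h. \<Sum>t<T. L (fst (h ! t)) (J t)) + C" .
    show "regret 2 L H \<sigma>' J T \<le> regret 2 ?L' ?L' \<sigma> J T"
      unfolding regret_def Min2 e using Lk[of 0] Lk[of 1] by (simp add: min_def)
  qed
qed


lemma both_signs:
  assumes M: "M \<ge> 1" and Lb: "\<forall>i<2. \<forall>j<M. 0 \<le> L i j \<and> L i j \<le> 1"
    and nt: "\<not> trivial_game 2 M L H"
  shows "\<exists>j1<M. L 0 j1 - L 1 j1 > 0" "\<exists>j2<M. L 0 j2 - L 1 j2 < 0"
proof -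
  show "\<exists>j1<M. L 0 j1 - L 1 j1 > 0"
  proof (rule ccontr)
    assume "\<not> ?thesis"
    then have "\<forall>j<M. L 0 j \<le> L (1 - 0) j" by auto
    then have "\<forall>T. minimax_regret 2 M L H T = 0" using zero_case[OF M Lb, of 0] by auto
    then show False using nt unfolding trivial_game_def by blast
  qed
  show "\<exists>j2<M. L 0 j2 - L 1 j2 < 0"
  proof (rule ccontr)
    assume "\<not> ?thesis"
    then have "\<forall>j<M. L 1 j \<le> L (1 - 1) j" by auto
    then have "\<forall>T. minimax_regret 2 M L H T = 0" using zero_case[OF M Lb, of 1] by auto
    then show False using nt unfolding trivial_game_def by blast
  qed
qed

lemma observable:
  assumes M: "M \<ge> 1" and Lb: "\<forall>i<2. \<forall>j<M. 0 \<le> L i j \<and> L i j \<le> 1"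
    and nt: "\<not> trivial_game 2 M L H"
    and j1: "j1 < M" "L 0 j1 - L 1 j1 > 0" and j2: "j2 < M" "L 0 j2 - L 1 j2 < 0"
  shows "\<exists>f g. \<forall>j<M. L 0 j - L 1 j = f (H 0 j) + g (H 1 j)"
proof (rule ccontr)
  assume nobs: "\<not> ?thesis"
  define d where "d j = L 0 j - L 1 j" for j
  obtain w where w1: "\<forall>i<2. \<forall>s. (\<Sum>j\<in>{j. j<M \<and> H i j = s}. w j) = 0"
    and w2: "(\<Sum>j<M. w j) = 0" and w3: "(\<Sum>j<M. w j * d j) = 1"
    using obs_or_w[of M d H] nobs unfolding d_def by blast
  define pos where "pos j = max (d j) 0" for j
  define neg where "neg j = max (- d j) 0" for j
  define Sp where "Sp = (\<Sum>j<M. pos j)"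
  define Sn where "Sn = (\<Sum>j<M. neg j)"
  have Sp: "Sp > 0"
  proof -
    have "pos j1 \<le> Sp" unfolding Sp_def using j1(1) by (intro member_le_sum) (auto simp: pos_def)
    moreover have "pos j1 > 0" using j1(2) by (simp add: pos_def d_def)
    ultimately show ?thesis by simp
  qed
  have Sn: "Sn > 0"
  proof -
    have "neg j2 \<le> Sn" unfolding Sn_def using j2(1) by (intro member_le_sum) (auto simp: neg_def)
    moreover have "neg j2 > 0" using j2(2) by (simp add: neg_def d_def)
    ultimately show ?thesis by simp
  qed
  define r where "r j = (if d j > 0 then Sn else if d j < 0 then Sp else 1)" for j
  have r_pos: "r j > 0" for j unfolding r_def using Sp Sn by auto
  have rd1: "r j * d j = Sn * pos j - Sp * neg j" for j
    unfolding r_def pos_def neg_def by auto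
  have rd: "(\<Sum>j<M. r j * d j) = 0"
    unfolding rd1 sum_subtractf sum_distrib_left[symmetric] Sp_def[symmetric] Sn_def[symmetric] by simp
  define R where "R = (\<Sum>j<M. r j)"
  have R: "R > 0" unfolding R_def using M r_pos by (intro sum_pos) (auto simp: lessThan_empty_iff)
  define m where "m = Min (r ` {..<M})"
  have m: "m > 0"
  proof -
    have "m \<in> r ` {..<M}" unfolding m_def using M by (intro Min_in) (auto simp: lessThan_empty_iff)
    then show ?thesis using r_pos by auto
  qed
  have mr: "m \<le> r j" if "j < M" for j unfolding m_def using that by (intro Min_le) auto
  define Wa where "Wa = (\<Sum>j<M. \<bar>w j\<bar>) + 1"
  have Wa: "Wa > 0" unfolding Wa_def by (simp add: add_nonneg_pos sum_nonneg)
  have wW: "\<bar>w j\<bar> \<le> Wa" if "j < M" for j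
  proof -
    have "\<bar>w j\<bar> \<le> (\<Sum>j<M. \<bar>w j\<bar>)" using that by (intro member_le_sum) auto
    then show ?thesis unfolding Wa_def by simp
  qed
  define \<delta> where "\<delta> = m / Wa"
  have \<delta>: "\<delta> > 0" unfolding \<delta>_def using m Wa by simp
  have dw: "\<delta> * \<bar>w j\<bar> \<le> r j" if "j < M" for j
  proof -
    have "\<delta> * \<bar>w j\<bar> \<le> \<delta> * Wa" using wW[OF that] \<delta> by (intro mult_left_mono) auto
    also have "\<dots> = m" unfolding \<delta>_def using Wa by simp
    finally show ?thesis using mr[OF that] by simp
  qed
  define qf1 where "qf1 j = (r j + \<delta> * w j) / R" for j
  define qf2 where "qf2 j = (r j - \<delta> * w j) / R" for j
  have nn1: "\<forall>j<M. qf1 j \<ge> 0"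
  proof (intro allI impI)
    fix j assume "j < M"
    moreover have "\<delta> * (- \<bar>w j\<bar>) \<le> \<delta> * w j" using \<delta> by (intro mult_left_mono) auto
    ultimately have "r j + \<delta> * w j \<ge> 0" using dw[of j] by simp
    then show "qf1 j \<ge> 0" unfolding qf1_def using R by simp
  qed
  have nn2: "\<forall>j<M. qf2 j \<ge> 0"
  proof (intro allI impI)
    fix j assume "j < M"
    moreover have "\<delta> * w j \<le> \<delta> * \<bar>w j\<bar>" using \<delta> by (intro mult_left_mono) auto
    ultimately have "r j - \<delta> * w j \<ge> 0" using dw[of j] by simp
    then show "qf2 j \<ge> 0" unfolding qf2_def using R by simp
  qed
  have s1: "(\<Sum>j<M. qf1 j) = 1"
    unfolding qf1_def sum_divide_distrib[symmetric] sum.distrib sum_distrib_left[symmetric] w2 R_def[symmetric]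
    using R by simp
  have s2: "(\<Sum>j<M. qf2 j) = 1"
    unfolding qf2_def sum_divide_distrib[symmetric] sum_subtractf sum_distrib_left[symmetric] w2 R_def[symmetric]
    using R by simp
  obtain q1 where q1: "set_pmf q1 \<subseteq> {..<M}" "\<forall>j<M. pmf q1 j = qf1 j" using mkpmf[OF nn1 s1] by blast
  obtain q2 where q2: "set_pmf q2 \<subseteq> {..<M}" "\<forall>j<M. pmf q2 j = qf2 j" using mkpmf[OF nn2 s2] by blast
  have f1: "finite (set_pmf q1)" using q1(1) finite_subset by blast
  have f2: "finite (set_pmf q2)" using q2(1) finite_subset by blast
  define \<epsilon> where "\<epsilon> = \<delta> / R"
  have \<epsilon>: "\<epsilon> > 0" unfolding \<epsilon>_def using \<delta> R by simp
  have e1: "E q1 (\<lambda>j. L 0 j - L 1 j) = \<epsilon>"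
  proof -
    have "E q1 (\<lambda>j. L 0 j - L 1 j) = (\<Sum>j<M. qf1 j * d j)"
      unfolding exp_fin_supp[OF q1(1)] d_def using q1(2) by (intro sum.cong) auto
    also have "\<dots> = ((\<Sum>j<M. r j * d j) + \<delta> * (\<Sum>j<M. w j * d j)) / R"
      unfolding qf1_def by (simp add: sum_divide_distrib[symmetric] sum.distrib sum_distrib_left algebra_simps)
    finally show ?thesis unfolding rd w3 \<epsilon>_def by simp
  qed
  have e2: "E q2 (\<lambda>j. L 0 j - L 1 j) = - \<epsilon>"
  proof -
    have "E q2 (\<lambda>j. L 0 j - L 1 j) = (\<Sum>j<M. qf2 j * d j)"
      unfolding exp_fin_supp[OF q2(1)] d_def using q2(2) by (intro sum.cong) auto
    also have "\<dots> = ((\<Sum>j<M. r j * d j) - \<delta> * (\<Sum>j<M. w j * d j)) / R"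
      unfolding qf2_def by (simp add: sum_divide_distrib[symmetric] sum_subtractf sum_distrib_left algebra_simps)
    finally show ?thesis unfolding rd w3 \<epsilon>_def by simp
  qed
  have maps: "\<forall>i<2. map_pmf (H i) q1 = map_pmf (H i) q2"
  proof (intro allI impI pmf_eqI)
    fix i s assume i: "i < (2::nat)"
    let ?C = "{j. j<M \<and> H i j = s}"
    have "pmf (map_pmf (H i) q1) s = (\<Sum>j\<in>?C. qf1 j)"
      unfolding pmf_map_fin_supp[OF q1(1)] using q1(2) by (intro sum.cong) auto
    also have "\<dots> = ((\<Sum>j\<in>?C. r j) + \<delta> * (\<Sum>j\<in>?C. w j)) / R"
      unfolding qf1_def by (simp add: sum_divide_distrib[symmetric] sum.distrib sum_distrib_left)
    also have "\<dots> = ((\<Sum>j\<in>?C. r j) - \<delta> * (\<Sum>j\<in>?C. w j)) / R" using w1 i by simp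
    also have "\<dots> = (\<Sum>j\<in>?C. qf2 j)"
      unfolding qf2_def by (simp add: sum_divide_distrib[symmetric] sum_subtractf sum_distrib_left)
    also have "\<dots> = pmf (map_pmf (H i) q2) s"
      unfolding pmf_map_fin_supp[OF q2(1)] using q2(2) by (intro sum.cong) auto
    finally show "pmf (map_pmf (H i) q1) s = pmf (map_pmf (H i) q2) s" .
  qed
  have lin: "\<epsilon> / 2 * real T \<le> minimax_regret 2 M L H T" for T
  proof (rule minimax_lower)
    fix \<sigma> assume v: "valid_strategy 2 \<sigma>"
    have a1: "E (Pq q1 T) (\<lambda>xs. regret 2 L H \<sigma> (Jx xs) T) \<le> Sups M L H T \<sigma>"
      by (rule avg_le_sup[OF v f1 q1(1) M bdd_reg[OF v Lb]])
    have a2: "E (Pq q2 T) (\<lambda>xs. regret 2 L H \<sigma> (Jx xs) T) \<le> Sups M L H T \<sigma>"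
      by (rule avg_le_sup[OF v f2 q2(1) M bdd_reg[OF v Lb]])
    have "T * \<epsilon> \<le> E (Pq q1 T) (\<lambda>xs. regret 2 L H \<sigma> (Jx xs) T) + E (Pq q2 T) (\<lambda>xs. regret 2 L H \<sigma> (Jx xs) T)"
      by (rule linLB[OF v f1 f2 maps e1 e2]) (use \<epsilon> in simp)
    moreover have "\<epsilon> / 2 * real T = (real T * \<epsilon>) / 2" by simp
    ultimately show "\<epsilon> / 2 * real T \<le> Sups M L H T \<sigma>" using a1 a2 by linarith
  qed
  have "trivial_game 2 M L H"
    unfolding trivial_game_def using lin \<epsilon> by (intro disjI2 exI[of _ "\<epsilon>/2"]) auto
  then show False using nt by blast
qed


theorem theorem3:
  fixes M :: nat and L0 H0 :: "nat \<Rightarrow> nat \<Rightarrow> real"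
  assumes "M \<ge> 1"
    and "\<forall>i<2. \<forall>j<M. 0 \<le> L0 i j \<and> L0 i j \<le> 1"
    and "\<not> trivial_game 2 M L0 H0"
  shows "(\<exists>L' :: nat \<Rightarrow> nat \<Rightarrow> real. easier 2 M L0 H0 L' L')
       \<and> (\<exists>c C :: real. 0 < c \<and> c \<le> C \<and>
            (\<forall>T::nat. T \<ge> 1 \<longrightarrow>
               c * sqrt (real T) \<le> minimax_regret 2 M L0 H0 T
               \<and> minimax_regret 2 M L0 H0 T \<le> C * sqrt (real T)))"
proof -
  note M = assms(1) and Lb = assms(2) and nt = assms(3)
  obtain j1 where j1: "j1 < M" "L0 0 j1 - L0 1 j1 > 0" using both_signs(1)[OF assms] by blast
  obtain j2 where j2: "j2 < M" "L0 0 j2 - L0 1 j2 < 0" using both_signs(2)[OF assms] by blast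
  obtain f g where fg: "\<forall>j<M. L0 0 j - L0 1 j = f (H0 0 j) + g (H0 1 j)"
    using observable[OF assms j1 j2] by blast
  define B0 where "B0 = (\<Sum>j<M. \<bar>f (H0 0 j)\<bar> + \<bar>g (H0 1 j)\<bar>)"
  define \<phi> where "\<phi> i s = (if i = (0::nat) then f s + B0 else B0 - g s)" for i s
  define c where "c j = \<phi> 0 (H0 0 j) - L0 0 j" for j
  have Lrep: "\<forall>i<2. \<forall>j<M. L0 i j = \<phi> i (H0 i j) - c j"
  proof (intro allI impI)
    fix i j assume i: "i < (2::nat)" and j: "j < M"
    then have "i = 0 \<or> i = 1" by auto
    then show "L0 i j = \<phi> i (H0 i j) - c j"
      using fg j unfolding c_def \<phi>_def by auto
  qed
  have fb: "\<bar>f (H0 0 j)\<bar> + \<bar>g (H0 1 j)\<bar> \<le> B0" if "j < M" for j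
    unfolding B0_def using that by (intro member_le_sum) auto
  define B where "B = 2 * B0 + 1"
  have B0: "B0 \<ge> 0" unfolding B0_def by (intro sum_nonneg) auto
  have B: "B > 0" unfolding B_def using B0 by simp
  have phb: "\<forall>i<2. \<forall>j<M. 0 \<le> \<phi> i (H0 i j) \<and> \<phi> i (H0 i j) \<le> B"
  proof (intro allI impI)
    fix i j assume i: "i < (2::nat)" and j: "j < M"
    have "\<bar>f (H0 0 j)\<bar> \<le> B0" "\<bar>g (H0 1 j)\<bar> \<le> B0" using fb[OF j] by auto
    moreover have "i = 0 \<or> i = 1" using i by auto
    ultimately show "0 \<le> \<phi> i (H0 i j) \<and> \<phi> i (H0 i j) \<le> B"
      unfolding \<phi>_def B_def by (auto simp: abs_le_iff)
  qed
  have part1: "\<exists>L' :: nat \<Rightarrow> nat \<Rightarrow> real. easier 2 M L0 H0 L' L'"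
    using easier_part[where M=M and L=L0 and \<phi>=\<phi> and H=H0 and c=c, OF Lrep] by blast
  interpret tg: twogame L0 j1 j2 by unfold_locales (use j1 j2 in auto)
  define c0 where "c0 = tg.v / (4 * (2 * tg.K / tg.v + 1))"
  have c0: "c0 > 0" unfolding c0_def using tg.v_pos tg.K_pos by (simp add: add_pos_pos)
  have qsub: "set_pmf tg.q \<subseteq> {..<M}" unfolding tg.q_def using twopt_set j1(1) j2(1) by blast
  have lower: "c0 * sqrt T \<le> minimax_regret 2 M L0 H0 T" if T: "T \<ge> 1" for T
  proof (rule minimax_lower)
    fix \<sigma> assume v: "valid_strategy 2 \<sigma>"
    have "c0 * sqrt T \<le> E (Pq tg.q T) (\<lambda>xs. regret 2 L0 H0 \<sigma> (Jx xs) T)"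
      unfolding c0_def by (rule tg.avg_sqrt[OF v T])
    also have "\<dots> \<le> Sups M L0 H0 T \<sigma>"
      by (rule avg_le_sup[OF v tg.qfin qsub M bdd_reg[OF v Lb]])
    finally show "c0 * sqrt T \<le> Sups M L0 H0 T \<sigma>" .
  qed
  have upper: "minimax_regret 2 M L0 H0 T \<le> (2 * B) * sqrt T" if T: "T \<ge> 1" for T
    using exp3_minimax[where M=M and L=L0 and \<phi>=\<phi> and H=H0 and c=c and B=B and T=T, OF M Lrep phb B T bdd_Sups[OF Lb M]] by simp
  have all: "\<forall>T::nat. T \<ge> 1 \<longrightarrow>
               c0 * sqrt (real T) \<le> minimax_regret 2 M L0 H0 T
               \<and> minimax_regret 2 M L0 H0 T \<le> max (2 * B) c0 * sqrt (real T)"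
  proof (intro allI impI conjI)
    fix T :: nat assume T: "T \<ge> 1"
    show "c0 * sqrt (real T) \<le> minimax_regret 2 M L0 H0 T" by (rule lower[OF T])
    have "(2 * B) * sqrt T \<le> max (2 * B) c0 * sqrt T" by (intro mult_right_mono) auto
    then show "minimax_regret 2 M L0 H0 T \<le> max (2 * B) c0 * sqrt (real T)" using upper[OF T] by linarith
  qed
  have "\<exists>c C :: real. 0 < c \<and> c \<le> C \<and>
            (\<forall>T::nat. T \<ge> 1 \<longrightarrow>
               c * sqrt (real T) \<le> minimax_regret 2 M L0 H0 T
               \<and> minimax_regret 2 M L0 H0 T \<le> C * sqrt (real T))"
    using c0 all by (intro exI[of _ c0] exI[of _ "max (2 * B) c0"]) auto
  with part1 show ?thesis by blast
qed

end
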